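(* In the setting described in the context, let $0<h<h_\circ$ and let $\alpha$ be a multi-index with $|\alpha|\le 2k+5$. Then there is a constant $C>1$, independent of $h$ and $v$, such that $|\partial_x^\alpha\Phi_v^h(x)|\le C$ for all $x\in B_{R_\circ}$.
   Context: $B_r$ is the open ball of radius $r$ centered at $0$ in $\mathbb R^d$, $2\le d\le4$. Let $\phi:\mathbb R^d\to\mathbb R$ coincide on $[-1,1]^d$ with an analytic convex function of finite type defined on $[-2,2]^d$ and vanish outside $[-1,1]^d$; finite type means there are an integer $k\ge2$ and $m,M>0$ with $|\partial^\alpha\phi(x)|\le M$ for $|\alpha|\le 2k+5$ and $\sum_{j=2}^k\frac1{j!}|(u\cdot\nabla)^j\phi(x)|\ge m$ for all $x\in[-1,1]^d$ and unit vectors $u$. For $v\in\mathbb R^d$ with $-v\in\nabla\phi(B_{1/4})$, let $\omega_v\in B_{1/4}$ be the unique point with $\nabla\phi(\omega_v)=-v$ and $\Phi_v(x)=\phi(x+\omega_v)+v\cdot x-\phi(\omega_v)$. There is $c_\phi>0$ with $(c_\phi|x|)^k\le\Phi_v(x)$ on $B_{1/2}$ for all such $v$; fix $0<h_\circ\le(c_\phi/4)^k$. For $0<h<h_\circ$ let $\mathcal B_v^h=\{x\in B_{1/2}:\Phi_v(x)<h/2\}$, let $T_v^h$ be an invertible affine map of $\mathbb R^d$ with $B_1\subset(T_v^h)^{-1}\mathcal B_v^h\subset B_d$, and set $\Phi_v^h(x)=h^{-1}\Phi_v(T_v^hx)$. Standing assumption: $h_\circ$ is small enough (arranged in the paper by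 localizing the cutoff to a small ball) that every $\Phi_v^h$ is defined, convex and of finite type on a ball $B_{R_\circ}$ with $R_\circ\ge100d$. *)

theory Defs
  imports "HOL-Analysis.Analysis"
begin

definition pderiv_coord :: "'n::finite \<Rightarrow> (real^'n \<Rightarrow> real) \<Rightarrow> real^'n \<Rightarrow> real" where
  "pderiv_coord i f x = deriv (\<lambda>t. f (x + t *\<^sub>R axis i 1)) 0"

text \<open>Iterated partial derivative along a list of coordinates; a multi-index alpha
  corresponds to any list in which each coordinate i occurs alpha(i) times, and
  |alpha| is the length of the list.\<close>
fun pderivs :: "'n::finite list \<Rightarrow> (real^'n \<Rightarrow> real) \<Rightarrow> real^'n \<Rightarrow> real" where
  "pderivs [] f = f"
| "pderivs (i # is) f = pderiv_coord i (pderivs is f)"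

text \<open>j-th directional derivative (u . grad)^j f at x.\<close>
definition dir_deriv :: "nat \<Rightarrow> real^'n \<Rightarrow> (real^'n \<Rightarrow> real) \<Rightarrow> real^'n \<Rightarrow> real" where
  "dir_deriv j u f x = (deriv ^^ j) (\<lambda>t. f (x + t *\<^sub>R u)) 0"

text \<open>Real analyticity at a point: locally equal to an (unconditionally, hence absolutely)
  convergent multivariate power series.\<close>
definition real_analytic_at :: "(real^'n::finite \<Rightarrow> real) \<Rightarrow> real^'n \<Rightarrow> bool" where
  "real_analytic_at f x0 \<longleftrightarrow> (\<exists>r>0. \<exists>c :: ('n \<Rightarrow> nat) \<Rightarrow> real.
     \<forall>y. norm (y - x0) < r \<longrightarrow>
       ((\<lambda>a. c a * (\<Prod>i\<in>UNIV. (y $ i - x0 $ i) ^ a i)) has_sum f y) UNIV)"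

definition cube :: "real \<Rightarrow> (real^'n::finite) set" where
  "cube s = {x. \<forall>i. \<bar>x $ i\<bar> \<le> s}"

definition open_cube :: "real \<Rightarrow> (real^'n::finite) set" where
  "open_cube s = {x. \<forall>i. \<bar>x $ i\<bar> < s}"

definition Phi :: "(real^'n::finite \<Rightarrow> real) \<Rightarrow> real^'n \<Rightarrow> real^'n \<Rightarrow> real^'n \<Rightarrow> real" where
  "Phi \<phi> v \<omega> x = \<phi> (x + \<omega>) + v \<bullet> x - \<phi> \<omega>"

definition admissible :: "(real^'n::finite \<Rightarrow> real) \<Rightarrow> real^'n \<Rightarrow> real^'n \<Rightarrow> bool" where
  "admissible \<phi> v \<omega> \<longleftrightarrow> \<omega> \<in> ball 0 (1/4) \<and> (\<phi> has_derivative (\<lambda>y. (- v) \<bullet> y)) (at \<omega>)"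

definition sect :: "(real^'n::finite \<Rightarrow> real) \<Rightarrow> real^'n \<Rightarrow> real^'n \<Rightarrow> real \<Rightarrow> (real^'n) set" where
  "sect \<phi> v \<omega> h = {x \<in> ball 0 (1/2). Phi \<phi> v \<omega> x < h / 2}"

definition normalizing :: "(real^'n::finite \<Rightarrow> real) \<Rightarrow> real^'n \<Rightarrow> real^'n \<Rightarrow> real
     \<Rightarrow> real^'n^'n \<Rightarrow> real^'n \<Rightarrow> bool" where
  "normalizing \<phi> v \<omega> h A b \<longleftrightarrow> invertible A \<and>
     ball 0 1 \<subseteq> {x. A *v x + b \<in> sect \<phi> v \<omega> h} \<and>
     {x. A *v x + b \<in> sect \<phi> v \<omega> h} \<subseteq> ball 0 (real CARD('n))"

definition Phi_h :: "(real^'n::finite \<Rightarrow> real) \<Rightarrow> real^'n \<Rightarrow> real^'n \<Rightarrow> real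
     \<Rightarrow> real^'n^'n \<Rightarrow> real^'n \<Rightarrow> real^'n \<Rightarrow> real" where
  "Phi_h \<phi> v \<omega> h A b x = Phi \<phi> v \<omega> (A *v x + b) / h"

end

theory Submission
  imports Defs
begin


lemma lip_bound:
  fixes f f' :: "real \<Rightarrow> real"
  assumes "\<And>t. \<bar>t\<bar> < \<tau> \<Longrightarrow> (f has_real_derivative f' t) (at t)"
    and "\<And>t. \<bar>t\<bar> < \<tau> \<Longrightarrow> \<bar>f' t\<bar> \<le> B"
    and "\<bar>x\<bar> < \<tau>"
  shows "\<bar>f x - f 0\<bar> \<le> B * \<bar>x\<bar>"
proof -
  have "norm (f x - f 0) \<le> B * norm (x - 0)"
  proof (rule field_differentiable_bound[where S="{-\<bar>x\<bar>..\<bar>x\<bar>}"])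
    show "convex {-\<bar>x\<bar>..\<bar>x\<bar>}" by simp
    show "\<And>z. z \<in> {-\<bar>x\<bar>..\<bar>x\<bar>} \<Longrightarrow> (f has_field_derivative f' z) (at z within {-\<bar>x\<bar>..\<bar>x\<bar>})"
      using assms(1,3) by (metis abs_le_iff atLeastAtMost_iff has_field_derivative_at_within le_less_trans minus_le_iff)
    show "\<And>z. z \<in> {-\<bar>x\<bar>..\<bar>x\<bar>} \<Longrightarrow> norm (f' z) \<le> B"
    proof -
      fix z assume "z \<in> {-\<bar>x\<bar>..\<bar>x\<bar>}"
      hence "\<bar>z\<bar> < \<tau>" using assms(3) by auto
      thus "norm (f' z) \<le> B" using assms(2) by simp
    qed
  qed auto
  thus ?thesis by simp
qed

lemma real_summable_cmp:
  fixes f g :: "'a \<Rightarrow> real"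
  assumes "g summable_on A" "\<And>x. x \<in> A \<Longrightarrow> \<bar>f x\<bar> \<le> g x"
  shows "f summable_on A"
proof -
  have "(\<lambda>x. \<bar>f x\<bar>) summable_on A"
    by (rule summable_on_comparison_test[OF assms(1)]) (use assms(2) in auto)
  thus ?thesis using summable_on_iff_abs_summable_on_real[of f A] by simp
qed

lemma termwise_deriv:
  fixes f f' :: "'a::countable \<Rightarrow> real \<Rightarrow> real" and B :: "'a \<Rightarrow> real"
  assumes inf: "infinite (UNIV::'a set)" and tau: "\<tau> > 0"
    and der: "\<And>a t. \<bar>t\<bar> < \<tau> \<Longrightarrow> (f a has_real_derivative f' a t) (at t)"
    and bnd: "\<And>a t. \<bar>t\<bar> < \<tau> \<Longrightarrow> \<bar>f' a t\<bar> \<le> B a"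
    and Bs: "B summable_on UNIV"
    and f0: "(\<lambda>a. f a 0) summable_on UNIV"
  shows "((\<lambda>t. infsum (\<lambda>a. f a t) UNIV) has_real_derivative infsum (\<lambda>a. f' a 0) UNIV) (at 0)"
proof -
  obtain e :: "'a \<Rightarrow> nat" where e: "bij_betw e UNIV UNIV"
    using countableE_infinite[OF _ inf] by blast
  define g where "g = inv e"
  have g: "bij_betw g UNIV UNIV" unfolding g_def using e bij_betw_inv_into by blast
  define S where "S = {-\<tau><..<\<tau>}"
  have Sc: "convex S" unfolding S_def by simp
  have intS: "interior S = S" unfolding S_def by simp
  have inS: "x \<in> S \<longleftrightarrow> \<bar>x\<bar> < \<tau>" for x unfolding S_def by auto
  have Bsg: "(\<lambda>n. B (g n)) summable_on UNIV"
    using summable_on_reindex_bij_betw[OF g, of B] Bs by simp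
  hence Bsum: "summable (\<lambda>n. B (g n))" by (rule summable_on_imp_summable)
  have sumabs: "(\<lambda>a. f a x) summable_on UNIV" if "\<bar>x\<bar> < \<tau>" for x
  proof -
    have "(\<lambda>a. \<bar>f a 0\<bar> + B a * \<bar>x\<bar>) summable_on UNIV"
    proof (rule summable_on_add)
      show "(\<lambda>a. \<bar>f a 0\<bar>) summable_on UNIV"
        using f0 summable_on_iff_abs_summable_on_real[of "\<lambda>a. f a 0"] by simp
      show "(\<lambda>a. B a * \<bar>x\<bar>) summable_on UNIV" using Bs by (rule summable_on_cmult_left)
    qed
    moreover have "\<bar>f a x\<bar> \<le> \<bar>f a 0\<bar> + B a * \<bar>x\<bar>" for a
    proof -
      have "\<bar>f a x - f a 0\<bar> \<le> B a * \<bar>x\<bar>"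
        by (rule lip_bound[of \<tau> "f a" "f' a"]) (use der bnd that in auto)
      moreover have "0 \<le> B a" using bnd[of 0 a] tau by auto
      ultimately show ?thesis by auto
    qed
    ultimately show ?thesis by (rule real_summable_cmp)
  qed
  have eq: "infsum (\<lambda>a. h a) UNIV = (\<Sum>n. h (g n))" if "h summable_on UNIV" for h :: "'a \<Rightarrow> real"
  proof -
    have "(\<lambda>n. h (g n)) summable_on UNIV"
      using summable_on_reindex_bij_betw[OF g, of h] that by simp
    hence "((\<lambda>n. h (g n)) has_sum infsum (\<lambda>n. h (g n)) UNIV) UNIV"
      by (simp add: summable_iff_has_sum_infsum)
    hence "(\<lambda>n. h (g n)) sums infsum (\<lambda>n. h (g n)) UNIV" by (rule has_sum_imp_sums)
    moreover have "infsum (\<lambda>n. h (g n)) UNIV = infsum h UNIV"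
      using infsum_reindex_bij_betw[OF g, of h] by simp
    ultimately show ?thesis by (simp add: sums_iff)
  qed
  have unif: "uniformly_convergent_on S (\<lambda>n x. \<Sum>i<n. f' (g i) x)"
    unfolding uniformly_convergent_on_def
  proof
    show "uniform_limit S (\<lambda>n x. \<Sum>i<n. f' (g i) x) (\<lambda>x. \<Sum>i. f' (g i) x) sequentially"
    proof (rule Weierstrass_m_test_ev[OF _ Bsum])
      show "\<forall>\<^sub>F n in sequentially. \<forall>x\<in>S. norm (f' (g n) x) \<le> B (g n)"
        using bnd inS by (intro always_eventually) simp
    qed
  qed
  have s0: "summable (\<lambda>n. f (g n) 0)"
    using summable_on_reindex_bij_betw[OF g, of "\<lambda>a. f a 0"] f0
    by (simp add: summable_on_imp_summable)
  have "0 \<in> interior S" using intS inS tau by auto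
  have dd: "(f (g n) has_real_derivative f' (g n) x) (at x within S)" if "x \<in> S" for n x
    using der[of x "g n"] that inS by (simp add: has_field_derivative_at_within)
  have "0 \<in> S" using inS tau by simp
  from has_field_derivative_series'(2)[OF Sc dd unif this s0 \<open>0 \<in> interior S\<close>]
  have D: "((\<lambda>x. \<Sum>n. f (g n) x) has_real_derivative (\<Sum>n. f' (g n) 0)) (at 0)" .
  have "(\<lambda>a. f' a 0) summable_on UNIV"
    using Bs by (rule real_summable_cmp) (use bnd[of 0] tau in simp)
  hence e1: "infsum (\<lambda>a. f' a 0) UNIV = (\<Sum>n. f' (g n) 0)" by (rule eq)
  have ev: "\<forall>\<^sub>F x in nhds 0. (\<Sum>n. f (g n) x) = infsum (\<lambda>a. f a x) UNIV"
  proof -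
    have "\<forall>\<^sub>F x in nhds 0. x \<in> S" using intS inS tau
      by (intro eventually_nhds_in_open) (auto simp: S_def)
    thus ?thesis
    proof eventually_elim
      case (elim x)
      thus ?case using eq[OF sumabs, of x] inS by simp
    qed
  qed
  show ?thesis
    using DERIV_cong_ev[OF refl ev refl] D e1 by simp
qed


definition deg :: "('n::finite \<Rightarrow> nat) \<Rightarrow> nat" where "deg a = (\<Sum>i\<in>UNIV. a i)"
definition mnm :: "real^'n::finite \<Rightarrow> ('n \<Rightarrow> nat) \<Rightarrow> real" where
  "mnm z a = (\<Prod>i\<in>UNIV. (z$i)^(a i))"
definition Ser :: "(('n::finite \<Rightarrow> nat) \<Rightarrow> real) \<Rightarrow> real^'n \<Rightarrow> real^'n \<Rightarrow> real" where
  "Ser c x0 y = infsum (\<lambda>a. c a * mnm (y - x0) a) UNIV"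
definition goodR :: "(('n::finite \<Rightarrow> nat) \<Rightarrow> real) \<Rightarrow> real \<Rightarrow> bool" where
  "goodR c \<rho> \<longleftrightarrow> (\<forall>r. 0 \<le> r \<and> r < \<rho> \<longrightarrow> (\<lambda>a. \<bar>c a\<bar> * r^deg a) summable_on UNIV)"
definition up :: "'n \<Rightarrow> ('n \<Rightarrow> nat) \<Rightarrow> ('n \<Rightarrow> nat)" where "up i a = a(i := Suc (a i))"
definition dcf :: "real^'n::finite \<Rightarrow> (('n \<Rightarrow> nat) \<Rightarrow> real) \<Rightarrow> ('n \<Rightarrow> nat) \<Rightarrow> real" where
  "dcf w c a = (\<Sum>i\<in>UNIV. w$i * (real (a i) + 1) * c (up i a))"

lemma sum_summable_on:
  fixes f :: "'i \<Rightarrow> 'a \<Rightarrow> real"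
  assumes "finite I" "\<And>i. i \<in> I \<Longrightarrow> f i summable_on A"
  shows "(\<lambda>x. \<Sum>i\<in>I. f i x) summable_on A \<and> infsum (\<lambda>x. \<Sum>i\<in>I. f i x) A = (\<Sum>i\<in>I. infsum (f i) A)"
  using assms
proof (induction I rule: finite_induct)
  case empty thus ?case by simp
next
  case (insert j I)
  have s1: "f j summable_on A" using insert by simp
  have s2: "(\<lambda>x. \<Sum>i\<in>I. f i x) summable_on A" using insert by simp
  have e2: "infsum (\<lambda>x. \<Sum>i\<in>I. f i x) A = (\<Sum>i\<in>I. infsum (f i) A)" using insert by simp
  show ?case using insert.hyps summable_on_add[OF s1 s2] infsum_add[OF s1 s2] e2 by simp
qed

lemma deg_up: "deg (up i a) = Suc (deg a)"
proof -
  have "up i a = (\<lambda>j. a j + (if j = i then 1 else 0))" unfolding up_def by auto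
  hence "deg (up i a) = (\<Sum>j\<in>UNIV. a j + (if j = i then 1 else 0))" unfolding deg_def by simp
  also have "\<dots> = deg a + 1" unfolding deg_def by (simp add: sum.distrib)
  finally show ?thesis by simp
qed

lemma up_down: "a i \<noteq> 0 \<Longrightarrow> up i (a(i := a i - 1)) = a"
  unfolding up_def by auto

lemma down_up: "(up i b)(i := up i b i - 1) = b"
  unfolding up_def by auto

lemma inj_up: "inj (up i)"
proof (rule injI)
  fix a b assume "up i a = up i b"
  thus "a = b" by (metis down_up)
qed

lemma range_up: "range (up i) = {a::'n \<Rightarrow> nat. a i \<noteq> 0}"
proof
  show "range (up i) \<subseteq> {a. a i \<noteq> 0}" unfolding up_def by auto
  show "{a. a i \<noteq> 0} \<subseteq> range (up i)"
  proof
    fix a :: "'n \<Rightarrow> nat" assume "a \<in> {a. a i \<noteq> 0}"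
    hence "a i \<noteq> 0" by simp
    hence "a = up i (a(i := a i - 1))" by (metis up_down)
    thus "a \<in> range (up i)" by blast
  qed
qed

lemma le_deg: "a i \<le> deg a"
  unfolding deg_def by (rule member_le_sum) auto

lemma mono_bound:
  assumes "\<And>i. \<bar>z$i\<bar> \<le> r"
  shows "\<bar>mnm z a\<bar> \<le> r ^ deg a"
proof -
  have "\<bar>mnm z a\<bar> = (\<Prod>i\<in>UNIV. \<bar>z$i\<bar>^(a i))" unfolding mnm_def by (simp add: abs_prod power_abs)
  also have "\<dots> \<le> (\<Prod>i\<in>UNIV. r^(a i))"
    by (rule prod_mono) (use assms in \<open>auto intro: power_mono\<close>)
  also have "\<dots> = r ^ deg a" unfolding deg_def by (simp add: power_sum)
  finally show ?thesis .
qed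

lemma summable_up:
  fixes g :: "('n \<Rightarrow> nat) \<Rightarrow> real"
  assumes "g summable_on UNIV"
  shows "(\<lambda>b. g (up i b)) summable_on UNIV"
proof -
  have "g summable_on range (up i)" by (rule summable_on_subset_banach[OF assms]) auto
  thus ?thesis using summable_on_reindex[OF inj_up[of i], of g] by (simp add: o_def)
qed

lemma geo_bound:
  fixes r r' :: real
  assumes "0 < r" "r < r'"
  shows "\<exists>K. \<forall>n. real n * r^(n-1) \<le> K * r'^n"
proof -
  define q where "q = r / r'"
  have q: "norm q < 1" "0 \<le> q" using assms unfolding q_def by auto
  have "(\<lambda>n. of_nat n * q ^ n) \<longlonglongrightarrow> 0" by (rule powser_times_n_limit_0[OF q(1)])
  hence "Bseq (\<lambda>n. of_nat n * q ^ n)" by (rule convergent_imp_Bseq[OF convergentI])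
  then obtain K0 where K0: "\<And>n. norm (of_nat n * q ^ n) \<le> K0" by (meson BseqE less_imp_le)
  show ?thesis
  proof (intro exI allI)
    fix n :: nat
    show "real n * r^(n-1) \<le> (K0 / r) * r'^n"
    proof (cases n)
      case 0 thus ?thesis using K0[of 0] assms by simp
    next
      case (Suc m)
      have "real n * r^n = real n * q^n * r'^n"
        unfolding q_def using assms by (simp add: power_divide)
      also have "\<dots> \<le> K0 * r'^n"
        using K0[of n] q assms by (intro mult_right_mono) auto
      finally have "real n * r^n \<le> K0 * r'^n" .
      moreover have "real n * r^n = (real n * r^(n-1)) * r" using Suc by simp
      ultimately have "(real n * r^(n-1)) * r \<le> K0 * r'^n" by simp
      thus ?thesis using assms by (simp add: field_simps)
    qed
  qed
qed

lemma goodR_mono: "goodR c \<rho> \<Longrightarrow> 0 \<le> r \<Longrightarrow> r < \<rho> \<Longrightarrow> (\<lambda>a. \<bar>c a\<bar> * r^deg a) summable_on UNIV"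
  unfolding goodR_def by blast

lemma Bd_summable:
  assumes "goodR c \<rho>" "0 < r" "r < \<rho>"
  shows "(\<lambda>a. \<bar>c a\<bar> * real (deg a) * r^(deg a - 1)) summable_on UNIV"
proof -
  define r' where "r' = (r + \<rho>)/2"
  have r': "r < r'" "r' < \<rho>" "0 \<le> r'" using assms unfolding r'_def by auto
  obtain K where K: "\<And>n. real n * r^(n-1) \<le> K * r'^n" using geo_bound[OF assms(2) r'(1)] by blast
  have "(\<lambda>a. (\<bar>c a\<bar> * r'^deg a) * K) summable_on UNIV"
    by (rule summable_on_cmult_left[OF goodR_mono[OF assms(1) r'(3,2)]])
  thus ?thesis
  proof (rule real_summable_cmp)
    fix a
    have "\<bar>\<bar>c a\<bar> * real (deg a) * r^(deg a - 1)\<bar> = \<bar>c a\<bar> * (real (deg a) * r^(deg a - 1))"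
      using assms by (simp add: abs_mult)
    also have "\<dots> \<le> \<bar>c a\<bar> * (K * r'^deg a)" by (rule mult_left_mono[OF K]) simp
    finally show "\<bar>\<bar>c a\<bar> * real (deg a) * r^(deg a - 1)\<bar> \<le> \<bar>c a\<bar> * r'^deg a * K"
      by (simp add: ac_simps)
  qed
qed


lemma goodR_dcf:
  assumes g: "goodR c \<rho>"
  shows "goodR (dcf w c) \<rho>"
  unfolding goodR_def
proof (intro allI impI)
  fix r assume r: "0 \<le> r \<and> r < \<rho>"
  define s where "s = (r+\<rho>)/2"
  have s: "0 < s" "s < \<rho>" "r \<le> s" using r unfolding s_def by auto
  define Bd where "Bd a = \<bar>c a\<bar> * real (deg a) * s^(deg a - 1)" for a
  have Bs: "Bd summable_on UNIV" unfolding Bd_def by (rule Bd_summable[OF g s(1,2)])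
  have "(\<lambda>b. \<Sum>i\<in>UNIV. \<bar>w$i\<bar> * Bd (up i b)) summable_on UNIV"
    by (rule conjunct1[OF sum_summable_on]) (simp, rule summable_on_cmult_right[OF summable_up[OF Bs]])
  thus "(\<lambda>a. \<bar>dcf w c a\<bar> * r^deg a) summable_on UNIV"
  proof (rule real_summable_cmp)
    fix b :: "'a \<Rightarrow> nat"
    have "\<bar>\<bar>dcf w c b\<bar> * r^deg b\<bar> = \<bar>dcf w c b\<bar> * r^deg b" using r by simp
    also have "\<dots> \<le> (\<Sum>i\<in>UNIV. \<bar>w$i * (real (b i) + 1) * c (up i b)\<bar>) * r^deg b"
      unfolding dcf_def using r by (intro mult_right_mono sum_abs) auto
    also have "\<dots> = (\<Sum>i\<in>UNIV. \<bar>w$i * (real (b i) + 1) * c (up i b)\<bar> * r^deg b)"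
      by (simp add: sum_distrib_right)
    also have "\<dots> \<le> (\<Sum>i\<in>UNIV. \<bar>w$i\<bar> * Bd (up i b))"
    proof (rule sum_mono)
      fix i
      have "real (b i) + 1 \<le> real (deg (up i b))" using le_deg[of b i] deg_up[of i b] by simp
      moreover have "r^deg b \<le> s^(deg (up i b) - 1)" using deg_up[of i b] r s by (simp add: power_mono)
      ultimately have "(real (b i) + 1) * r^deg b \<le> real (deg (up i b)) * s^(deg (up i b) - 1)"
        using r by (intro mult_mono) auto
      hence "\<bar>w$i\<bar> * \<bar>c (up i b)\<bar> * ((real (b i) + 1) * r^deg b)
          \<le> \<bar>w$i\<bar> * \<bar>c (up i b)\<bar> * (real (deg (up i b)) * s^(deg (up i b) - 1))"
        by (intro mult_left_mono) auto
      thus "\<bar>w$i * (real (b i) + 1) * c (up i b)\<bar> * r^deg b \<le> \<bar>w$i\<bar> * Bd (up i b)"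
        unfolding Bd_def by (simp add: abs_mult ac_simps)
    qed
    finally show "\<bar>\<bar>dcf w c b\<bar> * r^deg b\<bar> \<le> (\<Sum>i\<in>UNIV. \<bar>w$i\<bar> * Bd (up i b))" .
  qed
qed

lemma mono_upd: "mnm x (a(i := v)) = (x$i)^v * (\<Prod>j\<in>UNIV-{i}. (x$j)^(a j))"
proof -
  have "mnm x (a(i := v)) = (x$i)^((a(i:=v)) i) * (\<Prod>j\<in>UNIV-{i}. (x$j)^((a(i:=v)) j))"
    unfolding mnm_def by (rule prod.remove) simp_all
  moreover have "(\<Prod>j\<in>UNIV-{i}. (x$j)^((a(i:=v)) j)) = (\<Prod>j\<in>UNIV-{i}. (x$j)^(a j))"
    by (rule prod.cong) auto
  ultimately show ?thesis by (metis fun_upd_same)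
qed

lemma dmono: "((\<lambda>t. mnm (z + t *\<^sub>R w) a) has_real_derivative
   (\<Sum>i\<in>UNIV. real (a i) * w$i * mnm (z + t *\<^sub>R w) (a(i := a i - 1)))) (at t)"
proof -
  have "((\<lambda>u. \<Prod>i\<in>UNIV. ((z + u *\<^sub>R w)$i)^(a i)) has_real_derivative
     (\<Sum>i\<in>UNIV. (real (a i) * ((z + t *\<^sub>R w)$i)^(a i - 1) * w$i) * (\<Prod>j\<in>UNIV-{i}. ((z + t *\<^sub>R w)$j)^(a j)))) (at t)"
  proof (rule has_field_derivative_prod)
    fix i
    show "((\<lambda>u. ((z + u *\<^sub>R w)$i)^(a i)) has_real_derivative real (a i) * ((z + t *\<^sub>R w)$i)^(a i - 1) * w$i) (at t)"
    proof -
      have d1: "((\<lambda>u. z$i + u * w$i) has_real_derivative w$i) (at t)"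
        by (auto intro!: derivative_eq_intros)
      have "((\<lambda>u. (z$i + u * w$i)^(a i)) has_real_derivative real (a i) * (w$i * (z$i + t * w$i)^(a i - Suc 0))) (at t)"
        by (rule DERIV_power[OF d1])
      thus ?thesis by (simp add: ac_simps)
    qed
  qed
  moreover have "(\<Sum>i\<in>UNIV. (real (a i) * ((z + t *\<^sub>R w)$i)^(a i - 1) * w$i) * (\<Prod>j\<in>UNIV-{i}. ((z + t *\<^sub>R w)$j)^(a j)))
     = (\<Sum>i\<in>UNIV. real (a i) * w$i * mnm (z + t *\<^sub>R w) (a(i := a i - 1)))"
    by (rule sum.cong) (auto simp: mono_upd)
  ultimately show ?thesis unfolding mnm_def by simp
qed

lemma term_bnd:
  assumes "\<And>j. \<bar>v$j\<bar> \<le> r" "0 \<le> r"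
  shows "\<bar>real (a i) * w$i * mnm v (a(i := a i - 1))\<bar> \<le> \<bar>w$i\<bar> * (real (deg a) * r^(deg a - 1))"
proof (cases "a i = 0")
  case True thus ?thesis using assms by simp
next
  case False
  have "deg a = Suc (deg (a(i := a i - 1)))" using deg_up[of i "a(i := a i - 1)"] up_down[of a i, OF False] by simp
  hence d: "deg (a(i := a i - 1)) = deg a - 1" by simp
  have "\<bar>mnm v (a(i := a i - 1))\<bar> \<le> r^(deg a - 1)" using mono_bound[OF assms(1)] d by metis
  moreover have "real (a i) \<le> real (deg a)" using le_deg[of a i] by simp
  ultimately have "real (a i) * \<bar>mnm v (a(i := a i - 1))\<bar> \<le> real (deg a) * r^(deg a - 1)"
    using assms by (intro mult_mono) auto
  hence "\<bar>w$i\<bar> * (real (a i) * \<bar>mnm v (a(i := a i - 1))\<bar>) \<le> \<bar>w$i\<bar> * (real (deg a) * r^(deg a - 1))"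
    by (intro mult_left_mono) auto
  thus ?thesis by (simp add: abs_mult ac_simps)
qed

lemma infinite_multi: "infinite (UNIV :: ('n \<Rightarrow> nat) set)"
proof -
  have "inj (\<lambda>n::nat. (\<lambda>_::'n. n))" by (auto simp: inj_def fun_eq_iff)
  hence "infinite (range (\<lambda>n::nat. (\<lambda>_::'n. n)))" by (rule range_inj_infinite)
  thus ?thesis by (rule infinite_super[OF subset_UNIV])
qed


lemma Ser_deriv:
  fixes c :: "('n::finite \<Rightarrow> nat) \<Rightarrow> real"
  assumes g: "goodR c \<rho>" and y: "\<And>i. \<bar>(y - x0)$i\<bar> < \<rho>"
  shows "((\<lambda>t. Ser c x0 (y + t *\<^sub>R w)) has_real_derivative Ser (dcf w c) x0 y) (at 0)"
proof -
  define z where "z = y - x0"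
  define m where "m = Max (range (\<lambda>i. \<bar>z$i\<bar>))"
  have zm: "\<bar>z$i\<bar> \<le> m" for i unfolding m_def by (rule Max_ge) auto
  have m0: "0 \<le> m" using zm[of undefined] by simp
  have "m \<in> range (\<lambda>i. \<bar>z$i\<bar>)" unfolding m_def by (rule Max_in) auto
  hence mr: "m < \<rho>" using y unfolding z_def by auto
  define r where "r = (m+\<rho>)/2"
  have r: "0 < r" "r < \<rho>" "m < r" using m0 mr unfolding r_def by auto
  define W where "W = (\<Sum>i\<in>UNIV. \<bar>w$i\<bar>)"
  have W0: "0 \<le> W" unfolding W_def by (simp add: sum_nonneg)
  have wW: "\<bar>w$i\<bar> \<le> W" for i unfolding W_def by (rule member_le_sum) auto
  define \<tau> where "\<tau> = (r - m)/(W+1)"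
  have tau: "0 < \<tau>" unfolding \<tau>_def using r W0 by simp
  have tauW: "\<tau> * W \<le> r - m"
  proof -
    have "\<tau> * W = (r - m) * (W / (W+1))" unfolding \<tau>_def by simp
    also have "\<dots> \<le> (r - m) * 1" using r W0 by (intro mult_left_mono) auto
    finally show ?thesis by simp
  qed
  have zt: "\<bar>(z + t *\<^sub>R w)$i\<bar> \<le> r" if "\<bar>t\<bar> < \<tau>" for t i
  proof -
    have "\<bar>(z + t *\<^sub>R w)$i\<bar> \<le> \<bar>z$i\<bar> + \<bar>t\<bar> * \<bar>w$i\<bar>" by (simp add: abs_mult abs_triangle_ineq[THEN order_trans])
    also have "\<dots> \<le> m + \<tau> * W" using zm[of i] that wW[of i] tau W0
      by (intro add_mono mult_mono) auto
    finally show ?thesis using tauW by simp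
  qed
  define f where "f a t = c a * mnm (z + t *\<^sub>R w) a" for a t
  define f' where "f' a t = c a * (\<Sum>i\<in>UNIV. real (a i) * w$i * mnm (z + t *\<^sub>R w) (a(i := a i - 1)))" for a t
  define Bd where "Bd a = \<bar>c a\<bar> * real (deg a) * r^(deg a - 1)" for a
  have der: "(f a has_real_derivative f' a t) (at t)" for a t
    unfolding f_def f'_def by (rule DERIV_cmult[OF dmono])
  have tb: "\<bar>(\<Sum>i\<in>UNIV. real (a i) * w$i * mnm v (a(i := a i - 1)))\<bar> \<le> W * (real (deg a) * r^(deg a - 1))"
    if "\<And>j. \<bar>v$j\<bar> \<le> r" for v a
  proof -
    have "\<bar>(\<Sum>i\<in>UNIV. real (a i) * w$i * mnm v (a(i := a i - 1)))\<bar>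
        \<le> (\<Sum>i\<in>UNIV. \<bar>real (a i) * w$i * mnm v (a(i := a i - 1))\<bar>)" by (rule sum_abs)
    also have "\<dots> \<le> (\<Sum>i\<in>UNIV. \<bar>w$i\<bar> * (real (deg a) * r^(deg a - 1)))"
      by (rule sum_mono, rule term_bnd) (use that r in auto)
    also have "\<dots> = W * (real (deg a) * r^(deg a - 1))" unfolding W_def by (simp add: sum_distrib_right)
    finally show ?thesis .
  qed
  have bnd: "\<bar>f' a t\<bar> \<le> W * Bd a" if "\<bar>t\<bar> < \<tau>" for a t
  proof -
    have "\<bar>f' a t\<bar> = \<bar>c a\<bar> * \<bar>(\<Sum>i\<in>UNIV. real (a i) * w$i * mnm (z + t *\<^sub>R w) (a(i := a i - 1)))\<bar>"
      unfolding f'_def by (simp add: abs_mult)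
    also have "\<dots> \<le> \<bar>c a\<bar> * (W * (real (deg a) * r^(deg a - 1)))"
      by (rule mult_left_mono[OF tb]) (use zt[OF that] in auto)
    finally show ?thesis unfolding Bd_def by (simp add: ac_simps)
  qed
  have Bs: "(\<lambda>a. W * Bd a) summable_on UNIV"
    unfolding Bd_def by (rule summable_on_cmult_right[OF Bd_summable[OF g r(1,2)]])
  have f0: "(\<lambda>a. f a 0) summable_on UNIV"
  proof (rule real_summable_cmp[OF goodR_mono[OF g _ r(2)]])
    show "0 \<le> r" using r by simp
    fix a
    have "\<bar>mnm z a\<bar> \<le> r^deg a" by (rule mono_bound) (use zt[of 0] tau in simp)
    hence "\<bar>c a\<bar> * \<bar>mnm z a\<bar> \<le> \<bar>c a\<bar> * r^deg a" by (rule mult_left_mono) simp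
    thus "\<bar>f a 0\<bar> \<le> \<bar>c a\<bar> * r^deg a" unfolding f_def by (simp add: abs_mult)
  qed
  have TW: "((\<lambda>t. infsum (\<lambda>a. f a t) UNIV) has_real_derivative infsum (\<lambda>a. f' a 0) UNIV) (at 0)"
    by (rule termwise_deriv[where f=f and f'=f' and B="\<lambda>a. W * Bd a", OF infinite_multi tau der bnd Bs f0])
  have feq: "(\<lambda>t. Ser c x0 (y + t *\<^sub>R w)) = (\<lambda>t. infsum (\<lambda>a. f a t) UNIV)"
  proof
    fix t
    have e: "y + t *\<^sub>R w - x0 = z + t *\<^sub>R w" unfolding z_def by (simp add: algebra_simps)
    show "Ser c x0 (y + t *\<^sub>R w) = infsum (\<lambda>a. f a t) UNIV" unfolding Ser_def f_def e ..
  qed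
  define T where "T i a = c a * (real (a i) * w$i * mnm z (a(i := a i - 1)))" for i a
  have Ts: "T i summable_on UNIV" for i
  proof (rule real_summable_cmp[OF summable_on_cmult_right[OF Bd_summable[OF g r(1,2)]]])
    fix a
    have "\<bar>real (a i) * w$i * mnm z (a(i := a i - 1))\<bar> \<le> \<bar>w$i\<bar> * (real (deg a) * r^(deg a - 1))"
      by (rule term_bnd) (use zt[of 0] tau r in auto)
    hence "\<bar>c a\<bar> * \<bar>real (a i) * w$i * mnm z (a(i := a i - 1))\<bar> \<le> \<bar>c a\<bar> * (\<bar>w$i\<bar> * (real (deg a) * r^(deg a - 1)))"
      by (rule mult_left_mono) simp
    thus "\<bar>T i a\<bar> \<le> \<bar>w$i\<bar> * (\<bar>c a\<bar> * real (deg a) * r ^ (deg a - 1))"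
      unfolding T_def by (simp add: abs_mult ac_simps)
  qed
  have f'0: "f' a 0 = (\<Sum>i\<in>UNIV. T i a)" for a
    unfolding f'_def T_def by (simp add: sum_distrib_left)
  have Tup: "T i (up i b) = w$i * (real (b i) + 1) * c (up i b) * mnm z b" for i b
  proof -
    have "(up i b)(i := up i b i - 1) = b" by (rule down_up)
    moreover have "up i b i = Suc (b i)" unfolding up_def by simp
    ultimately show ?thesis unfolding T_def by (simp add: ac_simps)
  qed
  have Treidx: "infsum (T i) UNIV = infsum (\<lambda>b. T i (up i b)) UNIV" for i
  proof -
    have "infsum (T i) UNIV = infsum (T i) (range (up i))"
    proof (rule infsum_cong_neutral)
      fix a assume "a \<in> UNIV - range (up i)"
      hence "a i = 0" using range_up[of i] by auto
      thus "T i a = 0" unfolding T_def by simp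
    qed auto
    also have "\<dots> = infsum (T i \<circ> up i) UNIV" by (rule infsum_reindex[OF inj_up])
    finally show ?thesis by (simp add: o_def)
  qed
  have TUs: "(\<lambda>b. T i (up i b)) summable_on UNIV" for i by (rule summable_up[OF Ts])
  have "infsum (\<lambda>a. f' a 0) UNIV = infsum (\<lambda>a. \<Sum>i\<in>UNIV. T i a) UNIV" by (simp add: f'0)
  also have "\<dots> = (\<Sum>i\<in>UNIV. infsum (T i) UNIV)"
    by (rule conjunct2[OF sum_summable_on]) (auto intro: Ts)
  also have "\<dots> = (\<Sum>i\<in>UNIV. infsum (\<lambda>b. T i (up i b)) UNIV)" by (simp add: Treidx)
  also have "\<dots> = infsum (\<lambda>b. \<Sum>i\<in>UNIV. T i (up i b)) UNIV"
    by (rule conjunct2[OF sum_summable_on, symmetric]) (auto intro: TUs)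
  also have "\<dots> = Ser (dcf w c) x0 y"
    unfolding Ser_def dcf_def z_def[symmetric] Tup by (simp add: sum_distrib_right)
  finally have "infsum (\<lambda>a. f' a 0) UNIV = Ser (dcf w c) x0 y" .
  thus ?thesis using TW feq by simp
qed


fun dd :: "(real^'n::finite \<Rightarrow> real) \<Rightarrow> (real^'n) list \<Rightarrow> real^'n \<Rightarrow> real" where
  "dd f [] p = f p"
| "dd f (w # ws) p = deriv (\<lambda>t. dd f ws (p + t *\<^sub>R w)) 0"

lemma ev_poly:
  fixes y x0 w :: "real^'n::finite"
  assumes "\<And>i. \<bar>(y - x0)$i\<bar> < \<rho>"
  shows "\<forall>\<^sub>F t in nhds 0. \<forall>i. \<bar>(y + t *\<^sub>R w - x0)$i\<bar> < \<rho>"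
proof (rule eventually_all_finite)
  fix i
  have "((\<lambda>t. \<bar>(y + t *\<^sub>R w - x0)$i\<bar>) \<longlongrightarrow> \<bar>(y + 0 *\<^sub>R w - x0)$i\<bar>) (nhds 0)"
    by (intro tendsto_intros filterlim_ident)
  moreover have "\<bar>(y + 0 *\<^sub>R w - x0)$i\<bar> < \<rho>" using assms by simp
  ultimately show "\<forall>\<^sub>F t in nhds 0. \<bar>(y + t *\<^sub>R w - x0)$i\<bar> < \<rho>"
    by (rule order_tendstoD(2))
qed

lemma goodR_foldr: "goodR c \<rho> \<Longrightarrow> goodR (foldr dcf ws c) \<rho>"
  by (induction ws) (auto intro: goodR_dcf)

lemma dd_local:
  assumes g: "goodR c \<rho>" and eq: "\<And>y. (\<And>i. \<bar>(y - x0)$i\<bar> < \<rho>) \<Longrightarrow> f y = Ser c x0 y"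
  shows "(\<And>i. \<bar>(y - x0)$i\<bar> < \<rho>) \<Longrightarrow> dd f ws y = Ser (foldr dcf ws c) x0 y
          \<and> ((\<lambda>t. dd f ws (y + t *\<^sub>R w)) has_real_derivative Ser (dcf w (foldr dcf ws c)) x0 y) (at 0)"
proof (induction ws arbitrary: y w)
  case Nil
  have e: "dd f [] y = Ser c x0 y" using eq Nil by simp
  have ev: "\<forall>\<^sub>F t in nhds 0. dd f [] (y + t *\<^sub>R w) = Ser c x0 (y + t *\<^sub>R w)"
    using ev_poly[of y x0 \<rho> w, OF Nil] by eventually_elim (simp add: eq)
  have "((\<lambda>t. Ser c x0 (y + t *\<^sub>R w)) has_real_derivative Ser (dcf w c) x0 y) (at 0)"
    by (rule Ser_deriv[OF g Nil])
  thus ?case using e DERIV_cong_ev[OF refl ev refl] by simp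
next
  case (Cons v ws)
  have ev: "\<forall>\<^sub>F t in nhds 0. dd f ws (y + t *\<^sub>R v) = Ser (foldr dcf ws c) x0 (y + t *\<^sub>R v)"
    using ev_poly[of y x0 \<rho> v, OF Cons.prems] by eventually_elim (use Cons.IH in simp)
  have D: "((\<lambda>t. dd f ws (y + t *\<^sub>R v)) has_real_derivative Ser (dcf v (foldr dcf ws c)) x0 y) (at 0)"
    using Cons.IH[OF Cons.prems] by blast
  hence e: "dd f (v # ws) y = Ser (foldr dcf (v # ws) c) x0 y"
    by (simp add: DERIV_imp_deriv)
  have ev2: "\<forall>\<^sub>F t in nhds 0. dd f (v # ws) (y + t *\<^sub>R w) = Ser (foldr dcf (v # ws) c) x0 (y + t *\<^sub>R w)"
  proof -
    have "\<forall>\<^sub>F t in nhds 0. \<forall>i. \<bar>(y + t *\<^sub>R w - x0)$i\<bar> < \<rho>" by (rule ev_poly[OF Cons.prems])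
    thus ?thesis
    proof eventually_elim
      case (elim t)
      have "((\<lambda>s. dd f ws (y + t *\<^sub>R w + s *\<^sub>R v)) has_real_derivative Ser (dcf v (foldr dcf ws c)) x0 (y + t *\<^sub>R w)) (at 0)"
        using Cons.IH[of "y + t *\<^sub>R w" v] elim by blast
      thus ?case by (simp add: DERIV_imp_deriv)
    qed
  qed
  have "((\<lambda>t. Ser (foldr dcf (v # ws) c) x0 (y + t *\<^sub>R w)) has_real_derivative Ser (dcf w (foldr dcf (v # ws) c)) x0 y) (at 0)"
    by (rule Ser_deriv[OF goodR_foldr[OF g] Cons.prems])
  thus ?case using e DERIV_cong_ev[OF refl ev2 refl] by simp
qed

lemma analytic_series:
  fixes f :: "real^'n::finite \<Rightarrow> real"
  assumes "real_analytic_at f x0"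
  shows "\<exists>\<rho>>0. \<exists>c. goodR c \<rho> \<and> (\<forall>y. (\<forall>i. \<bar>(y - x0)$i\<bar> < \<rho>) \<longrightarrow> f y = Ser c x0 y)"
proof -
  obtain r c where r: "r > 0" and hs: "\<And>y. norm (y - x0) < r \<Longrightarrow>
       ((\<lambda>a. c a * (\<Prod>i\<in>UNIV. (y $ i - x0 $ i) ^ a i)) has_sum f y) UNIV"
    using assms unfolding real_analytic_at_def by blast
  define \<rho> where "\<rho> = r / real CARD('n)"
  have rho: "\<rho> > 0" using r unfolding \<rho>_def by simp
  have nrm: "norm (y - x0) < r" if "\<And>i. \<bar>(y - x0)$i\<bar> < \<rho>" for y
  proof -
    have "norm (y - x0) \<le> (\<Sum>i\<in>UNIV. \<bar>(y - x0)$i\<bar>)" by (rule norm_le_l1_cart)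
    also have "\<dots> < (\<Sum>i\<in>(UNIV::'n set). \<rho>)" using that by (intro sum_strict_mono) auto
    also have "\<dots> = r" unfolding \<rho>_def by simp
    finally show ?thesis .
  qed
  have hs': "((\<lambda>a. c a * mnm (y - x0) a) has_sum f y) UNIV" if "norm (y - x0) < r" for y
    using hs[OF that] unfolding mnm_def by simp
  have "goodR c \<rho>"
    unfolding goodR_def
  proof (intro allI impI)
    fix s assume s: "0 \<le> s \<and> s < \<rho>"
    define y where "y = x0 + (\<chi> i. s)"
    have "\<bar>(y - x0)$i\<bar> < \<rho>" for i unfolding y_def using s by simp
    hence "norm (y - x0) < r" by (rule nrm)
    hence "(\<lambda>a. c a * mnm (y - x0) a) summable_on UNIV" by (rule has_sum_imp_summable[OF hs'])
    hence "(\<lambda>a. \<bar>c a * mnm (y - x0) a\<bar>) summable_on UNIV"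
      using summable_on_iff_abs_summable_on_real[of "\<lambda>a. c a * mnm (y - x0) a"] by simp
    moreover have "mnm (y - x0) a = s ^ deg a" for a
      unfolding mnm_def deg_def y_def by (simp add: power_sum)
    ultimately show "(\<lambda>a. \<bar>c a\<bar> * s ^ deg a) summable_on UNIV" using s by (simp add: abs_mult)
  qed
  moreover have "\<forall>y. (\<forall>i. \<bar>(y - x0)$i\<bar> < \<rho>) \<longrightarrow> f y = Ser c x0 y"
  proof (intro allI impI)
    fix y assume "\<forall>i. \<bar>(y - x0)$i\<bar> < \<rho>"
    hence "norm (y - x0) < r" by (intro nrm) simp
    hence "((\<lambda>a. c a * mnm (y - x0) a) has_sum f y) UNIV" by (rule hs')
    thus "f y = Ser c x0 y" unfolding Ser_def by (rule infsumI[symmetric])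
  qed
  ultimately show ?thesis using rho by blast
qed

lemma Ser_center: "Ser c x0 x0 = c (\<lambda>_. 0)"
proof -
  have "Ser c x0 x0 = infsum (\<lambda>a. c a * mnm 0 a) UNIV" unfolding Ser_def by simp
  also have "\<dots> = infsum (\<lambda>a. c a * mnm 0 a) {\<lambda>_. 0}"
  proof (rule infsum_cong_neutral)
    fix a :: "'a \<Rightarrow> nat" assume "a \<in> UNIV - {\<lambda>_. 0}"
    then obtain i where "a i \<noteq> 0" by auto
    hence "mnm 0 a = 0" unfolding mnm_def by (intro prod_zero) auto
    thus "c a * mnm 0 a = 0" by simp
  qed auto
  also have "\<dots> = c (\<lambda>_. 0)" unfolding mnm_def by simp
  finally show ?thesis .
qed


lemma dd_analytic:
  fixes f :: "real^'n::finite \<Rightarrow> real"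
  assumes "real_analytic_at f p"
  shows "\<exists>c. \<forall>ws. dd f ws p = foldr dcf ws c (\<lambda>_. 0)"
    and "((\<lambda>t. dd f ws (p + t *\<^sub>R w)) has_real_derivative dd f (w # ws) p) (at 0)"
proof -
  obtain \<rho> c where rho: "\<rho> > 0" and g: "goodR c \<rho>"
    and eq: "\<And>y. (\<forall>i. \<bar>(y - p)$i\<bar> < \<rho>) \<Longrightarrow> f y = Ser c p y"
    using analytic_series[OF assms] by blast
  have pp: "\<And>i. \<bar>(p - p)$i\<bar> < \<rho>" using rho by simp
  note L = dd_local[OF g, of p f, OF eq pp]
  have "dd f ws p = foldr dcf ws c (\<lambda>_. 0)" for ws
    using L[of ws] Ser_center by (metis)
  thus "\<exists>c. \<forall>ws. dd f ws p = foldr dcf ws c (\<lambda>_. 0)" by blast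
  have "dd f (w # ws) p = Ser (foldr dcf (w # ws) c) p p" using L[of "w # ws"] by blast
  thus "((\<lambda>t. dd f ws (p + t *\<^sub>R w)) has_real_derivative dd f (w # ws) p) (at 0)"
    using L[of ws w] by simp
qed

lemma dcf_axis: "dcf (axis i 1) X a = (real (a i) + 1) * X (up i a)"
proof -
  have "dcf (axis i 1) X a = (\<Sum>j\<in>UNIV. (if j = i then (real (a j) + 1) * X (up j a) else 0))"
    unfolding dcf_def by (rule sum.cong) (auto simp: axis_def)
  thus ?thesis by simp
qed

lemma dcf_lin_w: "dcf w X a = (\<Sum>i\<in>UNIV. w$i * dcf (axis i 1) X a)"
  unfolding dcf_axis by (simp add: dcf_def ac_simps)

lemma dcf_lin_c: "dcf v (\<lambda>a. \<Sum>i\<in>I. l i * X i a) a = (\<Sum>i\<in>I. l i * dcf v (X i) a)"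
proof -
  have "dcf v (\<lambda>a. \<Sum>i\<in>I. l i * X i a) a = (\<Sum>j\<in>UNIV. \<Sum>i\<in>I. l i * (v$j * (real (a j) + 1) * X i (up j a)))"
    unfolding dcf_def by (simp add: sum_distrib_left ac_simps)
  also have "\<dots> = (\<Sum>i\<in>I. \<Sum>j\<in>UNIV. l i * (v$j * (real (a j) + 1) * X i (up j a)))" by (rule sum.swap)
  also have "\<dots> = (\<Sum>i\<in>I. l i * dcf v (X i) a)" unfolding dcf_def by (simp add: sum_distrib_left)
  finally show ?thesis .
qed

lemma foldr_lin_c: "foldr dcf pre (\<lambda>a. \<Sum>i\<in>I. l i * X i a) = (\<lambda>a. \<Sum>i\<in>I. l i * foldr dcf pre (X i) a)"
proof (induction pre)
  case Nil thus ?case by simp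
next
  case (Cons v pre)
  show ?case by (simp add: Cons.IH dcf_lin_c[where X="\<lambda>i. foldr dcf pre (X i)"])
qed

lemma foldr_lin: "foldr dcf (pre @ w # post) c a = (\<Sum>i\<in>UNIV. w$i * foldr dcf (pre @ axis i 1 # post) c a)"
proof -
  have "foldr dcf (pre @ w # post) c = foldr dcf pre (dcf w (foldr dcf post c))" by simp
  also have "dcf w (foldr dcf post c) = (\<lambda>a. \<Sum>i\<in>UNIV. w$i * dcf (axis i 1) (foldr dcf post c) a)"
    by (rule ext, rule dcf_lin_w)
  also have "foldr dcf pre \<dots> = (\<lambda>a. \<Sum>i\<in>UNIV. w$i * foldr dcf pre (dcf (axis i 1) (foldr dcf post c)) a)"
    by (rule foldr_lin_c)
  finally show ?thesis by simp
qed

lemma dd_lin: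
  fixes f :: "real^'n::finite \<Rightarrow> real"
  assumes "real_analytic_at f p"
  shows "dd f (pre @ w # post) p = (\<Sum>i\<in>UNIV. w$i * dd f (pre @ axis i 1 # post) p)"
proof -
  obtain c where c: "\<And>ws. dd f ws p = foldr dcf ws c (\<lambda>_. 0)" using dd_analytic(1)[OF assms] by blast
  show ?thesis unfolding c by (rule foldr_lin)
qed

definition nrm1 :: "real^'n::finite \<Rightarrow> real" where "nrm1 w = (\<Sum>i\<in>UNIV. \<bar>w$i\<bar>)"

lemma ml_bound_aux:
  fixes L :: "(real^'n::finite) list \<Rightarrow> real"
  assumes lin: "\<And>pre w post. L (pre @ w # post) = (\<Sum>i\<in>UNIV. w$i * L (pre @ axis i 1 # post))"
    and base: "\<And>idx. length idx = n \<Longrightarrow> \<bar>L (map (\<lambda>i. axis i 1) idx)\<bar> \<le> M"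
  shows "length idx + length ws = n \<Longrightarrow> \<bar>L (map (\<lambda>i. axis i 1) idx @ ws)\<bar> \<le> M * prod_list (map nrm1 ws)"
proof (induction ws arbitrary: idx)
  case Nil thus ?case using base by simp
next
  case (Cons w ws)
  have "\<bar>L (map (\<lambda>i. axis i 1) idx @ w # ws)\<bar> = \<bar>\<Sum>i\<in>UNIV. w$i * L (map (\<lambda>i. axis i 1) (idx @ [i]) @ ws)\<bar>"
    using lin[of "map (\<lambda>i. axis i 1) idx" w ws] by simp
  also have "\<dots> \<le> (\<Sum>i\<in>UNIV. \<bar>w$i\<bar> * \<bar>L (map (\<lambda>i. axis i 1) (idx @ [i]) @ ws)\<bar>)"
    by (rule order_trans[OF sum_abs]) (simp add: abs_mult)
  also have "\<dots> \<le> (\<Sum>i\<in>UNIV. \<bar>w$i\<bar> * (M * prod_list (map nrm1 ws)))"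
  proof (rule sum_mono)
    fix i
    have "\<bar>L (map (\<lambda>i. axis i 1) (idx @ [i]) @ ws)\<bar> \<le> M * prod_list (map nrm1 ws)"
      using Cons.IH[of "idx @ [i]"] Cons.prems by simp
    thus "\<bar>w$i\<bar> * \<bar>L (map (\<lambda>i. axis i 1) (idx @ [i]) @ ws)\<bar> \<le> \<bar>w$i\<bar> * (M * prod_list (map nrm1 ws))"
      by (rule mult_left_mono) simp
  qed
  also have "\<dots> = M * prod_list (map nrm1 (w # ws))" unfolding nrm1_def by (simp add: sum_distrib_left sum_distrib_right ac_simps)
  finally show ?case .
qed

lemma ml_bound:
  fixes L :: "(real^'n::finite) list \<Rightarrow> real"
  assumes lin: "\<And>pre w post. L (pre @ w # post) = (\<Sum>i\<in>UNIV. w$i * L (pre @ axis i 1 # post))"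
    and base: "\<And>idx. length idx = length ws \<Longrightarrow> \<bar>L (map (\<lambda>i. axis i 1) idx)\<bar> \<le> M"
  shows "\<bar>L ws\<bar> \<le> M * prod_list (map nrm1 ws)"
  using ml_bound_aux[where n="length ws" and idx="[]" and ws=ws, OF lin base] by simp

lemma pderivs_dd: "pderivs idx f p = dd f (map (\<lambda>i. axis i 1) idx) p"
proof (induction idx arbitrary: p)
  case Nil thus ?case by simp
next
  case (Cons i idx)
  show ?case by (simp add: pderiv_coord_def Cons.IH)
qed


definition Pl :: "(nat \<Rightarrow> real) \<Rightarrow> nat \<Rightarrow> real \<Rightarrow> real" where
  "Pl a n t = (\<Sum>m<n. a m * t^m)"

lemma Pl_Suc: "Pl a (Suc n) t = Pl a n t + a n * t^n"
  unfolding Pl_def by simp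

lemma Pl_diff: "Pl a (Suc n) (2*t) - 2^n * Pl a (Suc n) t = Pl (\<lambda>m. a m * (2^m - 2^n)) n t"
proof -
  have "Pl a (Suc n) (2*t) - 2^n * Pl a (Suc n) t = Pl a n (2*t) - 2^n * Pl a n t"
    unfolding Pl_Suc by (simp add: power_mult_distrib algebra_simps)
  also have "\<dots> = (\<Sum>m<n. a m * (2*t)^m - 2^n * (a m * t^m))"
    unfolding Pl_def by (simp add: sum_subtractf sum_distrib_left)
  also have "\<dots> = Pl (\<lambda>m. a m * (2^m - 2^n)) n t"
    unfolding Pl_def by (rule sum.cong) (simp_all add: power_mult_distrib algebra_simps)
  finally show ?thesis .
qed

lemma pow2_gap: "m < n \<Longrightarrow> 1 \<le> \<bar>(2::real)^m - 2^n\<bar>"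
proof -
  assume "m < n"
  hence "(2::real)^m * 2 \<le> 2^n"
    by (metis power_Suc2 Suc_leI one_le_numeral power_increasing)
  moreover have "(1::real) \<le> 2^m" by simp
  ultimately have "1 \<le> (2::real)^n - 2^m" by linarith
  thus ?thesis using abs_ge_minus_self[of "(2::real)^m - 2^n"] by linarith
qed

lemma poly_coeff_bound:
  "\<delta> > 0 \<Longrightarrow> \<exists>K. \<forall>a B. (\<forall>t. 0 \<le> t \<and> t \<le> \<delta> \<longrightarrow> \<bar>Pl a n t\<bar> \<le> B) \<longrightarrow> (\<forall>m<n. \<bar>a m\<bar> \<le> K * B)"
proof (induction n arbitrary: \<delta>)
  case 0 thus ?case by simp
next
  case (Suc n)
  obtain K where K: "\<And>a B. (\<forall>t. 0 \<le> t \<and> t \<le> \<delta>/2 \<longrightarrow> \<bar>Pl a n t\<bar> \<le> B) \<Longrightarrow> (\<forall>m<n. \<bar>a m\<bar> \<le> K * B)"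
    using Suc.IH[of "\<delta>/2"] Suc.prems by auto
  define S where "S = (\<Sum>m<n. K * (1 + 2^n) * \<delta>^m)"
  define K' where "K' = max (K * (1 + 2^n)) ((1 + S) / \<delta>^n)"
  show ?case
  proof (rule exI[of _ K'], intro allI impI)
    fix a B m assume hB: "\<forall>t. 0 \<le> t \<and> t \<le> \<delta> \<longrightarrow> \<bar>Pl a (Suc n) t\<bar> \<le> B"
      and mS: "m < Suc n"
    have B0: "0 \<le> B" using hB[rule_format, of 0] Suc.prems by auto
    define a' where "a' m = a m * (2^m - 2^n)" for m
    have "\<forall>t. 0 \<le> t \<and> t \<le> \<delta>/2 \<longrightarrow> \<bar>Pl a' n t\<bar> \<le> (1 + 2^n) * B"
    proof (intro allI impI)
      fix t assume t: "0 \<le> t \<and> t \<le> \<delta>/2"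
      have e: "Pl a' n t = Pl a (Suc n) (2*t) - 2^n * Pl a (Suc n) t" unfolding a'_def by (rule Pl_diff[symmetric])
      have b1: "\<bar>Pl a (Suc n) (2*t)\<bar> \<le> B" using hB t by auto
      have b2: "\<bar>Pl a (Suc n) t\<bar> \<le> B" using hB t Suc.prems by auto
      have "\<bar>Pl a' n t\<bar> \<le> \<bar>Pl a (Suc n) (2*t)\<bar> + \<bar>2^n * Pl a (Suc n) t\<bar>"
        unfolding e by (rule abs_triangle_ineq4)
      also have "\<bar>2^n * Pl a (Suc n) t\<bar> = 2^n * \<bar>Pl a (Suc n) t\<bar>" by (simp add: abs_mult)
      also have "2^n * \<bar>Pl a (Suc n) t\<bar> \<le> 2^n * B" using b2 by (intro mult_left_mono) auto
      finally have "\<bar>Pl a' n t\<bar> \<le> B + 2^n * B" using b1 by linarith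
      thus "\<bar>Pl a' n t\<bar> \<le> (1 + 2^n) * B" by (simp add: algebra_simps)
    qed
    hence Ka': "\<forall>m<n. \<bar>a' m\<bar> \<le> K * ((1 + 2^n) * B)" by (rule K)
    have low: "\<bar>a m\<bar> \<le> K * (1 + 2^n) * B" if "m < n" for m
    proof -
      have "\<bar>a m\<bar> \<le> \<bar>a m\<bar> * \<bar>(2::real)^m - 2^n\<bar>" using pow2_gap[OF that]
        by (metis abs_ge_zero mult.right_neutral mult_left_mono)
      also have "\<dots> = \<bar>a' m\<bar>" unfolding a'_def by (simp add: abs_mult)
      also have "\<dots> \<le> K * (1 + 2^n) * B" using Ka' that by (simp add: ac_simps)
      finally show ?thesis .
    qed
    have "\<bar>Pl a n \<delta>\<bar> \<le> (\<Sum>m<n. \<bar>a m * \<delta>^m\<bar>)" unfolding Pl_def by (rule sum_abs)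
    also have "\<dots> = (\<Sum>m<n. \<bar>a m\<bar> * \<delta>^m)" using Suc.prems by (simp add: abs_mult)
    also have "\<dots> \<le> (\<Sum>m<n. K * (1 + 2^n) * B * \<delta>^m)"
    proof (rule sum_mono)
      fix m assume "m \<in> {..<n}"
      thus "\<bar>a m\<bar> * \<delta>^m \<le> K * (1 + 2^n) * B * \<delta>^m"
        using low[of m] Suc.prems by (intro mult_right_mono) auto
    qed
    also have "\<dots> = B * S" unfolding S_def by (simp add: sum_distrib_left ac_simps)
    finally have PS: "\<bar>Pl a n \<delta>\<bar> \<le> B * S" .
    have "a n * \<delta>^n = Pl a (Suc n) \<delta> - Pl a n \<delta>" by (simp add: Pl_Suc)
    hence "\<bar>a n * \<delta>^n\<bar> \<le> \<bar>Pl a (Suc n) \<delta>\<bar> + \<bar>Pl a n \<delta>\<bar>" by simp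
    moreover have "\<bar>Pl a (Suc n) \<delta>\<bar> \<le> B" using hB Suc.prems by simp
    moreover have "\<bar>a n * \<delta>^n\<bar> = \<bar>a n\<bar> * \<delta>^n" using Suc.prems by (simp add: abs_mult)
    ultimately have "\<bar>a n\<bar> * \<delta>^n \<le> B + B * S" using PS by linarith
    hence top: "\<bar>a n\<bar> \<le> (1 + S) / \<delta>^n * B" using Suc.prems by (simp add: field_simps)
    show "\<bar>a m\<bar> \<le> K' * B"
    proof -
      from mS have "m < n \<or> m = n" by auto
      thus "\<bar>a m\<bar> \<le> K' * B"
      proof
        assume "m < n"
        hence "\<bar>a m\<bar> \<le> K * (1 + 2^n) * B" by (rule low)
        also have "\<dots> \<le> K' * B" unfolding K'_def using B0 by (intro mult_right_mono) auto
        finally show ?thesis .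
      next
        assume "m = n"
        hence "\<bar>a m\<bar> \<le> (1 + S) / \<delta>^n * B" using top by simp
        also have "\<dots> \<le> K' * B" unfolding K'_def using B0 by (intro mult_right_mono) auto
        finally show ?thesis .
      qed
    qed
  qed
qed

lemma taylor_line:
  fixes g :: "nat \<Rightarrow> real \<Rightarrow> real"
  assumes n: "n > 0"
    and D: "\<And>m s. m < n \<Longrightarrow> min 0 t \<le> s \<Longrightarrow> s \<le> max 0 t \<Longrightarrow> (g m has_real_derivative g (Suc m) s) (at s)"
  shows "\<exists>\<xi>. min 0 t \<le> \<xi> \<and> \<xi> \<le> max 0 t \<and> g 0 t = (\<Sum>m<n. g m 0 / fact m * t^m) + g n \<xi> / fact n * t^n"
proof (cases "t = 0")
  case True
  have "(\<Sum>m<n. g m 0 / fact m * t^m) = g 0 0"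
  proof -
    have "(\<Sum>m<n. g m 0 / fact m * t^m) = (\<Sum>m\<in>{0}. g m 0 / fact m * t^m)"
      by (rule sum.mono_neutral_right) (use True n in auto)
    thus ?thesis by simp
  qed
  thus ?thesis using True n by (intro exI[of _ 0]) simp
next
  case False
  obtain \<xi> where "(if t < 0 then t < \<xi> \<and> \<xi> < 0 else 0 < \<xi> \<and> \<xi> < t)"
    and eq: "g 0 t = (\<Sum>m<n. (g m 0 / fact m) * (t - 0)^m) + (g n \<xi> / fact n) * (t - 0)^n"
    using Taylor[of n g "g 0" "min 0 t" "max 0 t" 0 t] n D False by auto
  hence "min 0 t \<le> \<xi> \<and> \<xi> \<le> max 0 t" by (auto split: if_splits)
  thus ?thesis using eq by auto
qed


definition ABS_hyp :: "nat \<Rightarrow> nat \<Rightarrow> real \<Rightarrow> real \<Rightarrow> (real^'n::finite \<Rightarrow> real) \<Rightarrow> bool" where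
  "ABS_hyp k N R Chi F \<longleftrightarrow>
    (\<forall>y\<in>ball 0 R. \<forall>is i. ((\<lambda>t. pderivs is F (y + t *\<^sub>R axis i 1)) has_real_derivative pderivs (i # is) F y) (at 0)) \<and>
    (\<forall>y\<in>ball 0 R. \<forall>is. k \<le> length is \<and> length is \<le> N \<longrightarrow> \<bar>pderivs is F y\<bar> \<le> Chi) \<and>
    (\<forall>y\<in>ball 0 1. \<bar>F y\<bar> \<le> 1)"

lemma line_deriv:
  assumes H: "ABS_hyp k N R Chi F" and y: "y + s *\<^sub>R axis i 1 \<in> ball 0 R"
  shows "((\<lambda>t. pderivs ws F (y + t *\<^sub>R axis i 1)) has_real_derivative pderivs (i # ws) F (y + s *\<^sub>R axis i 1)) (at s)"
proof -
  have "((\<lambda>u. pderivs ws F (y + s *\<^sub>R axis i 1 + u *\<^sub>R axis i 1)) has_real_derivative pderivs (i # ws) F (y + s *\<^sub>R axis i 1)) (at 0)"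
    using H y unfolding ABS_hyp_def by blast
  moreover have "(\<lambda>u. pderivs ws F (y + s *\<^sub>R axis i 1 + u *\<^sub>R axis i 1)) = (\<lambda>u. pderivs ws F (y + (u + s) *\<^sub>R axis i 1))"
    by (simp add: algebra_simps)
  ultimately have "((\<lambda>u. pderivs ws F (y + (u + s) *\<^sub>R axis i 1)) has_real_derivative pderivs (i # ws) F (y + s *\<^sub>R axis i 1)) (at 0)"
    by simp
  thus ?thesis using DERIV_shift[of "\<lambda>t. pderivs ws F (y + t *\<^sub>R axis i 1)" _ 0 s] by simp
qed

lemma taylor_coord:
  assumes H: "ABS_hyp k N R Chi F" and n: "n > 0"
    and seg: "\<And>s. min 0 t \<le> s \<Longrightarrow> s \<le> max 0 t \<Longrightarrow> y + s *\<^sub>R axis i 1 \<in> ball 0 R"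
  shows "\<exists>\<xi>. min 0 t \<le> \<xi> \<and> \<xi> \<le> max 0 t \<and>
     pderivs ws F (y + t *\<^sub>R axis i 1) = (\<Sum>m<n. pderivs (replicate m i @ ws) F y / fact m * t^m)
        + pderivs (replicate n i @ ws) F (y + \<xi> *\<^sub>R axis i 1) / fact n * t^n"
proof -
  define g where "g m s = pderivs (replicate m i @ ws) F (y + s *\<^sub>R axis i 1)" for m s
  have D: "(g m has_real_derivative g (Suc m) s) (at s)" if "min 0 t \<le> s" "s \<le> max 0 t" for m s
    unfolding g_def using line_deriv[OF H seg[OF that], of "replicate m i @ ws"] by simp
  obtain \<xi> where "min 0 t \<le> \<xi> \<and> \<xi> \<le> max 0 t \<and> g 0 t = (\<Sum>m<n. g m 0 / fact m * t^m) + g n \<xi> / fact n * t^n"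
    using taylor_line[OF n, of t g] D by blast
  thus ?thesis unfolding g_def by auto
qed


lemma list_len_Suc: "length ws = Suc j \<Longrightarrow> \<exists>i vs. ws = i # vs \<and> length vs = j"
  by (cases ws) auto

lemma interior_bound:
  fixes F :: "real^'n::finite \<Rightarrow> real"
  assumes k: "2 \<le> k" and N: "2*k \<le> N" and R: "1 \<le> R" and Chi: "0 \<le> Chi"
    and K: "\<And>a B. (\<forall>t. 0 \<le> t \<and> t \<le> 1/(2*real k) \<longrightarrow> \<bar>Pl a k t\<bar> \<le> B) \<Longrightarrow> (\<forall>m<k. \<bar>a m\<bar> \<le> K * B)"
    and H: "ABS_hyp k N R Chi F"
  shows "j \<le> k - 1 \<Longrightarrow> norm y < 1 - real j / (2*real k) \<Longrightarrow> length ws = j \<Longrightarrow>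
     \<bar>pderivs ws F y\<bar> \<le> ((\<lambda>B. K * (B + Chi * (1/(2*real k))^k / fact k)) ^^ j) 1"
proof (induction j arbitrary: y ws)
  case 0
  hence "y \<in> ball 0 1" by simp
  thus ?case using H 0 unfolding ABS_hyp_def by auto
next
  case (Suc j)
  define \<delta> where "\<delta> = 1/(2*real k)"
  have dpos: "0 < \<delta>" unfolding \<delta>_def using k by simp
  obtain i vs where ws: "ws = i # vs" and vs: "length vs = j" using list_len_Suc[OF Suc.prems(3)] by blast
  define Bj where "Bj = ((\<lambda>B. K * (B + Chi * (1/(2*real k))^k / fact k)) ^^ j) 1"
  define a where "a m = pderivs (replicate m i @ vs) F y / fact m" for m
  have jk: "j \<le> k - 2" using Suc.prems(1) by simp
  have rj: "real (Suc j) / (2*real k) = real j / (2*real k) + \<delta>" unfolding \<delta>_def using k by (simp add: add_divide_distrib)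
  have "\<forall>t. 0 \<le> t \<and> t \<le> 1/(2*real k) \<longrightarrow> \<bar>Pl a k t\<bar> \<le> Bj + Chi * (1/(2*real k))^k / fact k"
  proof (intro allI impI)
    fix t assume t: "0 \<le> t \<and> t \<le> 1/(2*real k)"
    have seg: "y + s *\<^sub>R axis i 1 \<in> ball 0 R" and seg2: "norm (y + s *\<^sub>R axis i 1) < 1 - real j / (2*real k)"
      if "min 0 t \<le> s" "s \<le> max 0 t" for s
    proof -
      have "norm (y + s *\<^sub>R axis i 1) \<le> norm y + \<bar>s\<bar>" by (rule order_trans[OF norm_triangle_ineq]) simp
      also have "\<bar>s\<bar> \<le> \<delta>" using that t unfolding \<delta>_def by auto
      finally show "norm (y + s *\<^sub>R axis i 1) < 1 - real j / (2*real k)" using Suc.prems(2) rj by simp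
      moreover have "1 - real j / (2*real k) \<le> R" using R k by (smt (verit) divide_nonneg_nonneg of_nat_0_le_iff)
      ultimately show "y + s *\<^sub>R axis i 1 \<in> ball 0 R" by simp
    qed
    obtain \<xi> where xi: "min 0 t \<le> \<xi>" "\<xi> \<le> max 0 t" and eq:
      "pderivs vs F (y + t *\<^sub>R axis i 1) = (\<Sum>m<k. pderivs (replicate m i @ vs) F y / fact m * t^m)
        + pderivs (replicate k i @ vs) F (y + \<xi> *\<^sub>R axis i 1) / fact k * t^k"
      using taylor_coord[OF H _ seg, where n=k and ws=vs] k by auto
    have "Pl a k t = (\<Sum>m<k. pderivs (replicate m i @ vs) F y / fact m * t^m)" unfolding Pl_def a_def by simp
    hence PE: "Pl a k t = pderivs vs F (y + t *\<^sub>R axis i 1) - pderivs (replicate k i @ vs) F (y + \<xi> *\<^sub>R axis i 1) / fact k * t^k"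
      using eq by simp
    have b1: "\<bar>pderivs vs F (y + t *\<^sub>R axis i 1)\<bar> \<le> Bj"
      unfolding Bj_def by (rule Suc.IH) (use Suc.prems(1) seg2[of t] t vs in auto)
    have "\<bar>pderivs (replicate k i @ vs) F (y + \<xi> *\<^sub>R axis i 1)\<bar> \<le> Chi"
      using H seg[OF xi] vs jk N unfolding ABS_hyp_def by auto
    moreover have "\<bar>t^k\<bar> \<le> (1/(2*real k))^k" using t by (simp add: power_mono)
    ultimately have "\<bar>pderivs (replicate k i @ vs) F (y + \<xi> *\<^sub>R axis i 1)\<bar> * \<bar>t^k\<bar> \<le> Chi * (1/(2*real k))^k"
      using Chi by (intro mult_mono) auto
    hence b2: "\<bar>pderivs (replicate k i @ vs) F (y + \<xi> *\<^sub>R axis i 1) / fact k * t^k\<bar> \<le> Chi * (1/(2*real k))^k / fact k"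
      by (simp add: abs_mult divide_right_mono)
    show "\<bar>Pl a k t\<bar> \<le> Bj + Chi * (1/(2*real k))^k / fact k"
      unfolding PE using b1 b2 by linarith
  qed
  hence "\<forall>m<k. \<bar>a m\<bar> \<le> K * (Bj + Chi * (1/(2*real k))^k / fact k)" by (rule K)
  hence "\<bar>a 1\<bar> \<le> K * (Bj + Chi * (1/(2*real k))^k / fact k)" using k by simp
  moreover have "a 1 = pderivs ws F y" unfolding a_def ws by simp
  ultimately show ?case unfolding Bj_def by simp
qed


definition xS :: "'n set \<Rightarrow> real^'n::finite \<Rightarrow> real^'n" where
  "xS S x = (\<chi> j. if j \<in> S then x$j else 0)"

lemma xS_norm:
  assumes "i \<notin> S" "\<bar>s\<bar> \<le> \<bar>x$i\<bar>"
  shows "norm (xS S x + s *\<^sub>R axis i 1) \<le> norm x"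
proof (rule norm_le_componentwise_cart)
  fix j
  show "norm ((xS S x + s *\<^sub>R axis i 1)$j) \<le> norm (x$j)"
    using assms unfolding xS_def by (auto simp: axis_def)
qed

lemma xS_insert: "i \<notin> S \<Longrightarrow> xS (insert i S) x = xS S x + (x$i) *\<^sub>R axis i 1"
  unfolding xS_def by (auto simp: vec_eq_iff axis_def)

lemma xS_empty: "xS {} x = 0"
  unfolding xS_def by (simp add: vec_eq_iff)

lemma xS_UNIV: "xS UNIV x = x"
  unfolding xS_def by (simp add: vec_eq_iff)

lemma E_nonneg:
  fixes B Chi R :: real
  assumes "0 \<le> B" "0 \<le> Chi" "1 \<le> R"
  shows "0 \<le> ((\<lambda>B. (B + Chi) * (\<Sum>m\<le>k. R^m)) ^^ c) B"
proof (induction c)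
  case 0 thus ?case using assms by simp
next
  case (Suc c)
  have "0 \<le> (\<Sum>m\<le>k. R^m)" using assms by (intro sum_nonneg) auto
  thus ?case using Suc assms by simp
qed

lemma ext_bound:
  fixes F :: "real^'n::finite \<Rightarrow> real"
  assumes H: "ABS_hyp k N R Chi F" and kN: "k \<le> N" and R: "1 \<le> R" and Chi: "0 \<le> Chi"
    and B: "0 \<le> B" and x: "norm x < R"
    and base: "\<And>ws. length ws < k \<Longrightarrow> \<bar>pderivs ws F 0\<bar> \<le> B"
  shows "finite S \<Longrightarrow> length ws < k \<Longrightarrow>
     \<bar>pderivs ws F (xS S x)\<bar> \<le> ((\<lambda>B. (B + Chi) * (\<Sum>m\<le>k. R^m)) ^^ card S) B"
proof (induction S arbitrary: ws rule: finite_induct)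
  case empty thus ?case using base by (simp add: xS_empty)
next
  case (insert i S)
  define E where "E = (\<lambda>B. (B + Chi) * (\<Sum>m\<le>k. R^m))"
  define B' where "B' = (E ^^ card S) B"
  have B'0: "0 \<le> B'" unfolding B'_def E_def by (rule E_nonneg[OF B Chi R])
  define y where "y = xS S x"
  define t where "t = x$i"
  define n where "n = k - length ws"
  have n: "n > 0" unfolding n_def using insert.prems by simp
  have tR: "\<bar>t\<bar> \<le> R" unfolding t_def using component_le_norm_cart[of x i] x by simp
  have seg: "y + s *\<^sub>R axis i 1 \<in> ball 0 R" if "min 0 t \<le> s" "s \<le> max 0 t" for s
  proof -
    have "\<bar>s\<bar> \<le> \<bar>x$i\<bar>" using that unfolding t_def by auto
    hence "norm (y + s *\<^sub>R axis i 1) \<le> norm x" unfolding y_def by (rule xS_norm[OF insert.hyps(2)])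
    thus ?thesis using x by simp
  qed
  obtain \<xi> where xi: "min 0 t \<le> \<xi>" "\<xi> \<le> max 0 t" and eq:
    "pderivs ws F (y + t *\<^sub>R axis i 1) = (\<Sum>m<n. pderivs (replicate m i @ ws) F y / fact m * t^m)
      + pderivs (replicate n i @ ws) F (y + \<xi> *\<^sub>R axis i 1) / fact n * t^n"
    using taylor_coord[OF H n seg, where ws=ws] by blast
  have tm: "\<bar>t^m / fact m\<bar> \<le> R^m" for m
  proof -
    have "\<bar>t^m / fact m\<bar> = \<bar>t\<bar>^m / fact m" by (simp add: power_abs)
    also have "\<dots> \<le> \<bar>t\<bar>^m / 1"
      by (rule divide_left_mono) (auto simp: fact_ge_1)
    also have "\<dots> \<le> R^m" using tR by (simp add: power_mono)
    finally show ?thesis .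
  qed
  have s1: "\<bar>\<Sum>m<n. pderivs (replicate m i @ ws) F y / fact m * t^m\<bar> \<le> (\<Sum>m<n. B' * R^m)"
  proof (rule order_trans[OF sum_abs], rule sum_mono)
    fix m assume m: "m \<in> {..<n}"
    have "\<bar>pderivs (replicate m i @ ws) F y\<bar> \<le> B'"
      unfolding B'_def E_def y_def by (rule insert.IH) (use m n_def insert.prems in auto)
    moreover have "\<bar>pderivs (replicate m i @ ws) F y / fact m * t^m\<bar> = \<bar>pderivs (replicate m i @ ws) F y\<bar> * \<bar>t^m / fact m\<bar>"
      by (simp add: abs_mult)
    ultimately show "\<bar>pderivs (replicate m i @ ws) F y / fact m * t^m\<bar> \<le> B' * R^m"
      using tm[of m] B'0 by (metis abs_ge_zero mult_mono)
  qed
  have s2: "\<bar>pderivs (replicate n i @ ws) F (y + \<xi> *\<^sub>R axis i 1) / fact n * t^n\<bar> \<le> Chi * R^n"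
  proof -
    have "\<bar>pderivs (replicate n i @ ws) F (y + \<xi> *\<^sub>R axis i 1)\<bar> \<le> Chi"
      using H seg[OF xi] kN insert.prems unfolding ABS_hyp_def n_def by auto
    moreover have "\<bar>pderivs (replicate n i @ ws) F (y + \<xi> *\<^sub>R axis i 1) / fact n * t^n\<bar> = \<bar>pderivs (replicate n i @ ws) F (y + \<xi> *\<^sub>R axis i 1)\<bar> * \<bar>t^n / fact n\<bar>"
      by (simp add: abs_mult)
    ultimately show ?thesis using tm[of n] Chi by (metis abs_ge_zero mult_mono)
  qed
  have Rm: "0 \<le> R^m" for m using R by simp
  have "(\<Sum>m<n. B' * R^m) \<le> (\<Sum>m\<le>k. B' * R^m)"
    by (rule sum_mono2) (use n_def B'0 Rm in auto)
  moreover have "Chi * R^n \<le> (\<Sum>m\<le>k. Chi * R^m)"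
    by (rule member_le_sum[where f="\<lambda>m. Chi * R^m"]) (use n_def Chi Rm in auto)
  ultimately have "\<bar>pderivs ws F (y + t *\<^sub>R axis i 1)\<bar> \<le> (\<Sum>m\<le>k. B' * R^m) + (\<Sum>m\<le>k. Chi * R^m)"
    unfolding eq using s1 s2 by (smt (verit) abs_triangle_ineq)
  also have "\<dots> = E B'" unfolding E_def by (simp add: sum_distrib_left algebra_simps sum.distrib)
  also have "\<dots> = (E ^^ card (insert i S)) B" unfolding B'_def using insert.hyps by simp
  finally show ?case unfolding E_def y_def t_def using xS_insert[OF insert.hyps(2)] by simp
qed

lemma abstract_bound:
  fixes N k :: nat and R Chi :: real
  assumes k: "2 \<le> k" and N: "2*k \<le> N" and R: "1 \<le> R" and Chi: "0 \<le> Chi"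
  shows "\<exists>C. \<forall>F :: real^'n::finite \<Rightarrow> real. ABS_hyp k N R Chi F \<longrightarrow>
           (\<forall>y\<in>ball 0 R. \<forall>is. length is \<le> N \<longrightarrow> \<bar>pderivs is F y\<bar> \<le> C)"
proof -
  have dpos: "1/(2*real k) > 0" using k by simp
  obtain K where K: "\<And>a B. (\<forall>t. 0 \<le> t \<and> t \<le> 1/(2*real k) \<longrightarrow> \<bar>Pl a k t\<bar> \<le> B) \<Longrightarrow> (\<forall>m<k. \<bar>a m\<bar> \<le> K * B)"
    using poly_coeff_bound[OF dpos, of k] by blast
  define Bi where "Bi j = ((\<lambda>B. K * (B + Chi * (1/(2*real k))^k / fact k)) ^^ j) 1" for j
  define Bmax where "Bmax = (\<Sum>j<k. \<bar>Bi j\<bar>)"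
  define E where "E = (\<lambda>B. (B + Chi) * (\<Sum>m\<le>k. R^m))"
  have Bm0: "0 \<le> Bmax" unfolding Bmax_def by (simp add: sum_nonneg)
  show ?thesis
  proof (rule exI[of _ "(E ^^ CARD('n)) Bmax + Chi"], intro allI impI ballI)
    fix F :: "real^'n \<Rightarrow> real" and y :: "real^'n" and "is" :: "'n list"
    assume H: "ABS_hyp k N R Chi F" and y: "y \<in> ball 0 R" and len: "length is \<le> N"
    have E0: "0 \<le> (E ^^ CARD('n)) Bmax" unfolding E_def by (rule E_nonneg[OF Bm0 Chi R])
    have base: "\<bar>pderivs ws F 0\<bar> \<le> Bmax" if "length ws < k" for ws
    proof -
      have "\<bar>pderivs ws F 0\<bar> \<le> Bi (length ws)"
        unfolding Bi_def
        by (rule interior_bound[OF k N R Chi K H]) (use that k in \<open>auto simp: field_simps\<close>)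
      also have "\<dots> \<le> \<bar>Bi (length ws)\<bar>" by simp
      also have "\<dots> \<le> Bmax" unfolding Bmax_def
        by (rule member_le_sum[where f="\<lambda>j. \<bar>Bi j\<bar>"]) (use that in auto)
      finally show ?thesis .
    qed
    show "\<bar>pderivs is F y\<bar> \<le> (E ^^ CARD('n)) Bmax + Chi"
    proof (cases "length is < k")
      case True
      have "\<bar>pderivs is F (xS UNIV y)\<bar> \<le> (E ^^ card (UNIV::'n set)) Bmax"
        unfolding E_def by (rule ext_bound[OF H _ R Chi Bm0 _ base]) (use y N True in auto)
      thus ?thesis using Chi by (simp add: xS_UNIV)
    next
      case False
      hence "\<bar>pderivs is F y\<bar> \<le> Chi" using H y len unfolding ABS_hyp_def by auto
      thus ?thesis using E0 by simp
    qed
  qed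
qed


lemma ev_cube:
  fixes q w :: "real^'n::finite"
  assumes "q \<in> open_cube 1"
  shows "\<forall>\<^sub>F t in nhds 0. q + t *\<^sub>R w \<in> open_cube 1"
proof -
  have "\<And>i. \<bar>(q - 0)$i\<bar> < 1" using assms unfolding open_cube_def by simp
  from ev_poly[of q 0 1 w, OF this] show ?thesis
    unfolding open_cube_def by simp
qed

lemma ev_ball:
  fixes y w :: "real^'n::finite"
  assumes "y \<in> ball 0 R"
  shows "\<forall>\<^sub>F t in nhds 0. y + t *\<^sub>R w \<in> ball 0 R"
proof -
  have "((\<lambda>t. norm (y + t *\<^sub>R w)) \<longlongrightarrow> norm (y + 0 *\<^sub>R w)) (nhds 0)"
    by (intro tendsto_intros filterlim_ident)
  moreover have "norm (y + 0 *\<^sub>R w) < R" using assms by simp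
  ultimately have "\<forall>\<^sub>F t in nhds 0. norm (y + t *\<^sub>R w) < R" by (rule order_tendstoD(2))
  thus ?thesis by simp
qed

lemma open_cube_sub1: "open_cube 1 \<subseteq> (cube (1::real) :: (real^'n::finite) set)"
  unfolding open_cube_def cube_def by (auto simp: less_imp_le)

lemma open_cube_sub2: "cube 1 \<subseteq> (cube 2 :: (real^'n::finite) set)"
  unfolding cube_def by (auto intro: order_trans[of _ 1 2])

lemmas open_cube_sub = open_cube_sub1 open_cube_sub2

definition EE :: "(real^'n::finite \<Rightarrow> real) \<Rightarrow> (real^'n \<Rightarrow> real) \<Rightarrow> real^'n \<Rightarrow> real \<Rightarrow> real^'n^'n \<Rightarrow> real^'n \<Rightarrow> real^'n
   \<Rightarrow> 'n list \<Rightarrow> real^'n \<Rightarrow> real" where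
  "EE F \<psi> v h A b \<omega> is y = (if is = [] then F y else
     (dd \<psi> (map (\<lambda>i. A *v axis i 1) is) (A *v y + b + \<omega>) + (if length is = 1 then v \<bullet> (A *v axis (hd is) 1) else 0)) / h)"

lemma Q_shift: "A *v (y + t *\<^sub>R axis i 1) + b + \<omega> = (A *v y + b + \<omega>) + t *\<^sub>R (A *v axis i 1)"
  for A :: "real^'n::finite^'n"
  by (simp add: algebra_simps)

lemma CR1:
  fixes \<phi> \<psi> :: "real^'n::finite \<Rightarrow> real"
  assumes coin: "\<forall>x\<in>cube 1. \<phi> x = \<psi> x" and ana: "\<forall>x\<in>cube 2. real_analytic_at \<psi> x"
    and q: "A *v y + b + \<omega> \<in> open_cube 1"
  shows "((\<lambda>t. EE (Phi_h \<phi> v \<omega> h A b) \<psi> v h A b \<omega> is (y + t *\<^sub>R axis i 1)) has_real_derivative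
           EE (Phi_h \<phi> v \<omega> h A b) \<psi> v h A b \<omega> (i # is) y) (at 0)"
proof -
  define q where "q = A *v y + b + \<omega>"
  define w where "w = A *v axis i 1"
  have "q \<in> cube 1" using open_cube_sub1 q unfolding q_def by (meson subsetD)
  hence "q \<in> cube 2" using open_cube_sub2 by (meson subsetD)
  hence qa: "real_analytic_at \<psi> q" using ana by blast
  have D: "((\<lambda>t. dd \<psi> ws (q + t *\<^sub>R w)) has_real_derivative dd \<psi> (w # ws) q) (at 0)" for ws
    by (rule dd_analytic(2)[OF qa])
  show ?thesis
  proof (cases "is = []")
    case True
    have ev: "\<forall>\<^sub>F t in nhds 0. EE (Phi_h \<phi> v \<omega> h A b) \<psi> v h A b \<omega> is (y + t *\<^sub>R axis i 1)
          = (dd \<psi> [] (q + t *\<^sub>R w) + v \<bullet> (A *v y + b) + t * (v \<bullet> w) - \<phi> \<omega>) / h"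
      using ev_cube[OF q, of w]
    proof eventually_elim
      case (elim t)
      hence "q + t *\<^sub>R w \<in> cube 1" using open_cube_sub1 unfolding q_def by (meson subsetD)
      hence "\<phi> (q + t *\<^sub>R w) = \<psi> (q + t *\<^sub>R w)" using coin by blast
      moreover have "A *v (y + t *\<^sub>R axis i 1) + b + \<omega> = q + t *\<^sub>R w" unfolding q_def w_def by (rule Q_shift)
      moreover have "v \<bullet> (A *v (y + t *\<^sub>R axis i 1) + b) = v \<bullet> (A *v y + b) + t * (v \<bullet> w)"
        unfolding w_def by (simp add: algebra_simps inner_add_right)
      ultimately show ?case using True unfolding EE_def Phi_h_def Phi_def
        by (simp add: add.assoc)
    qed
    have d1: "((\<lambda>t. dd \<psi> [] (q + t *\<^sub>R w) + (v \<bullet> (A *v y + b) - \<phi> \<omega>)) has_real_derivative dd \<psi> [w] q + 0) (at 0)"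
      by (rule DERIV_add[OF D DERIV_const])
    have d2: "((\<lambda>t. t * (v \<bullet> w)) has_real_derivative 1 * (v \<bullet> w)) (at 0)"
      by (rule DERIV_cmult_right[OF DERIV_ident])
    have "((\<lambda>t. ((dd \<psi> [] (q + t *\<^sub>R w) + (v \<bullet> (A *v y + b) - \<phi> \<omega>)) + t * (v \<bullet> w)) / h) has_real_derivative
        ((dd \<psi> [w] q + 0) + 1 * (v \<bullet> w)) / h) (at 0)"
      by (rule DERIV_cdivide[OF DERIV_add[OF d1 d2]])
    moreover have "(\<lambda>t. ((dd \<psi> [] (q + t *\<^sub>R w) + (v \<bullet> (A *v y + b) - \<phi> \<omega>)) + t * (v \<bullet> w)) / h)
       = (\<lambda>t. (dd \<psi> [] (q + t *\<^sub>R w) + v \<bullet> (A *v y + b) + t * (v \<bullet> w) - \<phi> \<omega>) / h)"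
      by (simp add: algebra_simps)
    ultimately have "((\<lambda>t. (dd \<psi> [] (q + t *\<^sub>R w) + v \<bullet> (A *v y + b) + t * (v \<bullet> w) - \<phi> \<omega>) / h) has_real_derivative
        (dd \<psi> [w] q + 0 + 1 * (v \<bullet> w) - 0) / h) (at 0)" by simp
    moreover have "(dd \<psi> [w] q + 0 + 1 * (v \<bullet> w) - 0) / h = EE (Phi_h \<phi> v \<omega> h A b) \<psi> v h A b \<omega> (i # is) y"
      unfolding EE_def q_def w_def using True by simp
    ultimately show ?thesis using DERIV_cong_ev[OF refl ev refl] by simp
  next
    case False
    define cst where "cst = (if length is = 1 then v \<bullet> (A *v axis (hd is) 1) else 0)"
    have eq: "EE (Phi_h \<phi> v \<omega> h A b) \<psi> v h A b \<omega> is (y + t *\<^sub>R axis i 1)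
        = (dd \<psi> (map (\<lambda>i. A *v axis i 1) is) (q + t *\<^sub>R w) + cst) / h" for t
    proof -
      have e: "A *v (y + t *\<^sub>R axis i 1) + b + \<omega> = q + t *\<^sub>R w" unfolding q_def w_def by (rule Q_shift)
      show ?thesis unfolding EE_def cst_def e using False by simp
    qed
    have "((\<lambda>t. (dd \<psi> (map (\<lambda>i. A *v axis i 1) is) (q + t *\<^sub>R w) + cst) / h) has_real_derivative
        (dd \<psi> (w # map (\<lambda>i. A *v axis i 1) is) q + 0) / h) (at 0)"
      by (rule DERIV_cdivide[OF DERIV_add[OF D DERIV_const]])
    moreover have "(dd \<psi> (w # map (\<lambda>i. A *v axis i 1) is) q + 0) / h = EE (Phi_h \<phi> v \<omega> h A b) \<psi> v h A b \<omega> (i # is) y"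
      unfolding EE_def q_def w_def using False by simp
    ultimately show ?thesis unfolding eq by simp
  qed
qed

lemma CR2:
  fixes \<phi> \<psi> :: "real^'n::finite \<Rightarrow> real"
  assumes coin: "\<forall>x\<in>cube 1. \<phi> x = \<psi> x" and ana: "\<forall>x\<in>cube 2. real_analytic_at \<psi> x"
    and st: "\<forall>x\<in>ball 0 R. A *v x + b + \<omega> \<in> open_cube 1"
  shows "y \<in> ball 0 R \<Longrightarrow> pderivs is (Phi_h \<phi> v \<omega> h A b) y = EE (Phi_h \<phi> v \<omega> h A b) \<psi> v h A b \<omega> is y"
proof (induction "is" arbitrary: y)
  case Nil thus ?case unfolding EE_def by simp
next
  case (Cons i "is")
  have ev: "\<forall>\<^sub>F t in nhds 0. pderivs is (Phi_h \<phi> v \<omega> h A b) (y + t *\<^sub>R axis i 1)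
             = EE (Phi_h \<phi> v \<omega> h A b) \<psi> v h A b \<omega> is (y + t *\<^sub>R axis i 1)"
    using ev_ball[OF Cons.prems, of "axis i 1"] by eventually_elim (rule Cons.IH)
  have "((\<lambda>t. EE (Phi_h \<phi> v \<omega> h A b) \<psi> v h A b \<omega> is (y + t *\<^sub>R axis i 1)) has_real_derivative
           EE (Phi_h \<phi> v \<omega> h A b) \<psi> v h A b \<omega> (i # is) y) (at 0)"
    by (rule CR1[OF coin ana st[rule_format, OF Cons.prems]])
  hence "((\<lambda>t. pderivs is (Phi_h \<phi> v \<omega> h A b) (y + t *\<^sub>R axis i 1)) has_real_derivative
           EE (Phi_h \<phi> v \<omega> h A b) \<psi> v h A b \<omega> (i # is) y) (at 0)"
    using DERIV_cong_ev[OF refl ev refl] by simp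
  thus ?case by (simp add: pderiv_coord_def DERIV_imp_deriv)
qed


lemma prod_list_bound:
  fixes f :: "'a \<Rightarrow> real"
  assumes "\<And>x. x \<in> set xs \<Longrightarrow> 0 \<le> f x \<and> f x \<le> c"
  shows "0 \<le> prod_list (map f xs) \<and> prod_list (map f xs) \<le> c ^ length xs"
  using assms
proof (induction xs)
  case Nil thus ?case by simp
next
  case (Cons x xs)
  have fx: "0 \<le> f x" "f x \<le> c" using Cons.prems by auto
  have ih: "0 \<le> prod_list (map f xs) \<and> prod_list (map f xs) \<le> c ^ length xs" using Cons by auto
  show ?case using fx ih by (auto intro: mult_mono)
qed

lemma HI_arith:
  fixes L c h D :: real
  assumes "0 \<le> L" "L \<le> 1" "0 < c" "0 < h" "c^k * L^k < h" "k \<le> j" "j \<le> N" "1 \<le> D"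
  shows "(D * L)^j / h \<le> D^N / c^k"
proof -
  have "L^j \<le> L^k" using assms by (simp add: power_decreasing)
  hence "c^k * L^j \<le> c^k * L^k" using assms by (intro mult_left_mono) auto
  hence "c^k * L^j \<le> h" using assms by linarith
  hence Lj: "L^j / h \<le> 1 / c^k" using assms by (simp add: field_simps)
  have Dj: "D^j \<le> D^N" using assms by (simp add: power_increasing)
  have "(D * L)^j / h = D^j * (L^j / h)" by (simp add: power_mult_distrib)
  also have "\<dots> \<le> D^N * (1 / c^k)" using Dj Lj assms by (intro mult_mono) auto
  finally show ?thesis by simp
qed

lemma hyp_holds:
  fixes \<phi> \<psi> :: "real^'n::finite \<Rightarrow> real" and k :: nat and M c h R0 :: real
    and v \<omega> b :: "real^'n" and A :: "real^'n^'n"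
  assumes coincide: "\<forall>x\<in>cube 1. \<phi> x = \<psi> x"
    and analytic: "\<forall>x\<in>cube 2. real_analytic_at \<psi> x"
    and k: "k \<ge> 2" and M: "M > 0"
    and bound: "\<forall>x\<in>cube 1. \<forall>is. length is \<le> 2*k+5 \<longrightarrow> \<bar>pderivs is \<psi> x\<bar> \<le> M"
    and c: "c > 0"
    and gr: "\<forall>x\<in>ball 0 (1/2). (c * norm x) ^ k \<le> Phi \<phi> v \<omega> x"
    and h: "0 < h"
    and nz: "normalizing \<phi> v \<omega> h A b"
    and st: "\<forall>x\<in>ball 0 R0. A *v x + b + \<omega> \<in> open_cube 1"
  shows "ABS_hyp k (2*k+5) R0 (M * (4 * real CARD('n))^(2*k+5) / c^k) (Phi_h \<phi> v \<omega> h A b)"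
proof -
  define F where "F = Phi_h \<phi> v \<omega> h A b"
  define N where "N = 2*k+5"
  define d where "d = real CARD('n)"
  define col where "col i = A *v axis i 1" for i
  have sectz: "c^k * norm z^k < h/2 \<and> norm z < 1/2 \<and> 0 \<le> Phi \<phi> v \<omega> z \<and> Phi \<phi> v \<omega> z < h/2"
    if "z \<in> sect \<phi> v \<omega> h" for z
  proof -
    have z: "z \<in> ball 0 (1/2)" "Phi \<phi> v \<omega> z < h/2" using that unfolding sect_def by auto
    have g: "(c * norm z)^k \<le> Phi \<phi> v \<omega> z" using gr z(1) by blast
    have "0 \<le> (c * norm z)^k" using c by simp
    thus ?thesis using g z by (simp add: power_mult_distrib)
  qed
  have inS: "A *v x + b \<in> sect \<phi> v \<omega> h" if "norm x < 1" for x
    using nz that unfolding normalizing_def by auto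
  
  have DIFF: "((\<lambda>t. pderivs is F (y + t *\<^sub>R axis i 1)) has_real_derivative pderivs (i # is) F y) (at 0)"
    if y: "y \<in> ball 0 R0" for y "is" i
  proof -
    have ev: "\<forall>\<^sub>F t in nhds 0. pderivs is F (y + t *\<^sub>R axis i 1) = EE F \<psi> v h A b \<omega> is (y + t *\<^sub>R axis i 1)"
      using ev_ball[OF y, of "axis i 1"]
      by eventually_elim (unfold F_def, rule CR2[OF coincide analytic st])
    have "((\<lambda>t. EE F \<psi> v h A b \<omega> is (y + t *\<^sub>R axis i 1)) has_real_derivative EE F \<psi> v h A b \<omega> (i # is) y) (at 0)"
      unfolding F_def by (rule CR1[OF coincide analytic st[rule_format, OF y]])
    moreover have "pderivs (i # is) F y = EE F \<psi> v h A b \<omega> (i # is) y"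
      unfolding F_def by (rule CR2[OF coincide analytic st y])
    ultimately show ?thesis using DERIV_cong_ev[OF refl ev refl] by simp
  qed
  
  define lam where "lam i = max (norm (A *v ((1/2) *\<^sub>R axis i 1) + b)) (norm b)" for i
  define L where "L = Max (range lam)"
  have lamz: "\<exists>z\<in>sect \<phi> v \<omega> h. lam i = norm z" for i
  proof -
    have "A *v ((1/2) *\<^sub>R axis i 1) + b \<in> sect \<phi> v \<omega> h" by (rule inS) simp
    moreover have "A *v 0 + b \<in> sect \<phi> v \<omega> h" by (rule inS) simp
    ultimately show ?thesis unfolding lam_def by (auto simp: max_def)
  qed
  have "L \<in> range lam" unfolding L_def by (rule Max_in) auto
  then obtain i0 where "L = lam i0" by auto
  then obtain z0 where z0: "z0 \<in> sect \<phi> v \<omega> h" "L = norm z0" using lamz by metis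
  have L: "0 \<le> L" "L \<le> 1" "c^k * L^k < h" using sectz[OF z0(1)] z0(2) h by auto
  have lamL: "lam i \<le> L" for i unfolding L_def by (rule Max_ge) auto
  have colb: "norm (col i) \<le> 4 * L" for i
  proof -
    have "col i = 2 *\<^sub>R ((A *v ((1/2) *\<^sub>R axis i 1) + b) - b)" unfolding col_def
      by (simp add: matrix_vector_mult_scaleR)
    hence "norm (col i) = 2 * norm ((A *v ((1/2) *\<^sub>R axis i 1) + b) - b)" by simp
    also have "\<dots> \<le> 2 * (norm (A *v ((1/2) *\<^sub>R axis i 1) + b) + norm b)"
      by (rule mult_left_mono[OF norm_triangle_ineq4]) simp
    also have "\<dots> \<le> 2 * (lam i + lam i)" unfolding lam_def by simp
    finally show ?thesis using lamL[of i] by simp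
  qed
  have nrmb: "0 \<le> nrm1 (col i) \<and> nrm1 (col i) \<le> 4 * d * L" for i
  proof -
    have "nrm1 (col i) \<le> (\<Sum>j\<in>(UNIV::'n set). norm (col i))" unfolding nrm1_def
      by (rule sum_mono) (rule component_le_norm_cart)
    also have "\<dots> = d * norm (col i)" unfolding d_def by simp
    also have "\<dots> \<le> d * (4 * L)" unfolding d_def by (rule mult_left_mono[OF colb]) simp
    finally show ?thesis unfolding nrm1_def by (simp add: sum_nonneg)
  qed
  have "0 < CARD('n)" by (simp add: card_gt_0_iff)
  hence d1: "1 \<le> 4 * d" unfolding d_def by linarith
  
  have HI: "\<bar>pderivs is F y\<bar> \<le> M * (4 * d)^N / c^k"
    if y: "y \<in> ball 0 R0" and len: "k \<le> length is" "length is \<le> N" for y "is"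
  proof -
    define q where "q = A *v y + b + \<omega>"
    have qc: "q \<in> cube 1" using st y open_cube_sub1 unfolding q_def by blast
    hence qa: "real_analytic_at \<psi> q" using analytic open_cube_sub2 by blast
    have ne: "is \<noteq> []" "length is \<noteq> 1" using len k by auto
    have eq: "pderivs is F y = dd \<psi> (map col is) q / h"
      using CR2[OF coincide analytic st y, of "is" v h] ne unfolding EE_def F_def q_def col_def by simp
    have "\<bar>dd \<psi> (map col is) q\<bar> \<le> M * prod_list (map nrm1 (map col is))"
    proof (rule ml_bound[where L="\<lambda>ws. dd \<psi> ws q"])
      show "dd \<psi> (pre @ w # post) q = (\<Sum>i\<in>UNIV. w $ i * dd \<psi> (pre @ axis i 1 # post) q)" for pre w post
        by (rule dd_lin[OF qa])
      show "\<bar>dd \<psi> (map (\<lambda>i. axis i 1) idx) q\<bar> \<le> M" if "length idx = length (map col is)" for idx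
        using bound qc that len unfolding N_def by (auto simp: pderivs_dd[symmetric])
    qed
    also have "prod_list (map nrm1 (map col is)) \<le> (4 * d * L) ^ length is"
      using prod_list_bound[of "map col is" nrm1 "4 * d * L"] nrmb by auto
    hence "M * prod_list (map nrm1 (map col is)) \<le> M * (4 * d * L) ^ length is"
      using M by (intro mult_left_mono) auto
    finally have "\<bar>dd \<psi> (map col is) q\<bar> / h \<le> M * (4 * d * L) ^ length is / h"
      using h by (simp add: divide_right_mono)
    also have "\<dots> = M * ((4 * d * L) ^ length is / h)" by simp
    also have "\<dots> \<le> M * ((4 * d)^N / c^k)"
      by (rule mult_left_mono[OF HI_arith]) (use L c h len d1 M in auto)
    finally show ?thesis unfolding eq using h by (simp add: abs_div)
  qed
  
  have LO: "\<bar>F y\<bar> \<le> 1" if "y \<in> ball 0 1" for y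
  proof -
    have "A *v y + b \<in> sect \<phi> v \<omega> h" by (rule inS) (use that in simp)
    from sectz[OF this] have "0 \<le> Phi \<phi> v \<omega> (A *v y + b)" "Phi \<phi> v \<omega> (A *v y + b) < h/2" by auto
    thus ?thesis unfolding F_def Phi_h_def using h by (simp add: abs_div)
  qed
  show ?thesis
    unfolding ABS_hyp_def F_def[symmetric]
    using DIFF HI LO unfolding N_def d_def by auto
qed


theorem lemma4p4:
  fixes \<phi> \<psi> :: "real^'n::finite \<Rightarrow> real"
    and k :: nat and m M c\<^sub>\<phi> h\<^sub>0 R\<^sub>0 :: real
  assumes dim: "2 \<le> CARD('n)" "CARD('n) \<le> 4"
    and coincide: "\<forall>x\<in>cube 1. \<phi> x = \<psi> x"
    and vanish: "\<forall>x. x \<notin> cube 1 \<longrightarrow> \<phi> x = 0"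
    and analytic: "\<forall>x\<in>cube 2. real_analytic_at \<psi> x"
    and convex: "convex_on (cube 2) \<psi>"
    and k: "k \<ge> 2" and mM: "m > 0" "M > 0"
    and bound: "\<forall>x\<in>cube 1. \<forall>is. length is \<le> 2*k+5 \<longrightarrow> \<bar>pderivs is \<psi> x\<bar> \<le> M"
    and nondeg: "\<forall>x\<in>cube 1. \<forall>u. norm u = 1 \<longrightarrow>
                   (\<Sum>j=2..k. \<bar>dir_deriv j u \<psi> x\<bar> / fact j) \<ge> m"
    and c\<^sub>\<phi>: "c\<^sub>\<phi> > 0"
    and growth: "\<forall>v \<omega>. admissible \<phi> v \<omega> \<longrightarrow>
                   (\<forall>x\<in>ball 0 (1/2). (c\<^sub>\<phi> * norm x) ^ k \<le> Phi \<phi> v \<omega> x)"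
    and h\<^sub>0: "0 < h\<^sub>0" "h\<^sub>0 \<le> (c\<^sub>\<phi> / 4) ^ k"
    and R\<^sub>0: "R\<^sub>0 \<ge> 100 * real CARD('n)"
    and standing: "\<forall>h v \<omega> A b. 0 < h \<and> h < h\<^sub>0 \<and> admissible \<phi> v \<omega> \<and> normalizing \<phi> v \<omega> h A b
                     \<longrightarrow> (\<forall>x\<in>ball 0 R\<^sub>0. A *v x + b + \<omega> \<in> open_cube 1)"
  shows "\<forall>is :: 'n list. length is \<le> 2*k+5 \<longrightarrow>
           (\<exists>C>1. \<forall>h v \<omega> A b x. 0 < h \<and> h < h\<^sub>0 \<and> admissible \<phi> v \<omega> \<and> normalizing \<phi> v \<omega> h A b
              \<and> x \<in> ball 0 R\<^sub>0 \<longrightarrow> \<bar>pderivs is (Phi_h \<phi> v \<omega> h A b) x\<bar> \<le> C)"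
proof (intro allI impI)
  fix "is" :: "'n list" assume len: "length is \<le> 2*k+5"
  define Chi where "Chi = M * (4 * real CARD('n))^(2*k+5) / c\<^sub>\<phi>^k"
  have Chi0: "0 \<le> Chi" using mM c\<^sub>\<phi> unfolding Chi_def by simp
  have R1: "1 \<le> R\<^sub>0" using R\<^sub>0 dim by simp
  have kN: "2*k \<le> 2*k+5" by simp
  obtain C where C: "\<forall>F::real^'n \<Rightarrow> real. ABS_hyp k (2*k+5) R\<^sub>0 Chi F \<longrightarrow>
      (\<forall>y\<in>ball 0 R\<^sub>0. \<forall>is. length is \<le> 2*k+5 \<longrightarrow> \<bar>pderivs is F y\<bar> \<le> C)"
    using abstract_bound[OF k kN R1 Chi0] by blast
  show "\<exists>C>1. \<forall>h v \<omega> A b x. 0 < h \<and> h < h\<^sub>0 \<and> admissible \<phi> v \<omega> \<and> normalizing \<phi> v \<omega> h A b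
              \<and> x \<in> ball 0 R\<^sub>0 \<longrightarrow> \<bar>pderivs is (Phi_h \<phi> v \<omega> h A b) x\<bar> \<le> C"
  proof (rule exI[of _ "max C 2"], intro conjI allI impI)
    show "1 < max C 2" by simp
    fix h :: real and v \<omega> b x :: "real^'n" and A :: "real^'n^'n"
    assume H: "0 < h \<and> h < h\<^sub>0 \<and> admissible \<phi> v \<omega> \<and> normalizing \<phi> v \<omega> h A b \<and> x \<in> ball 0 R\<^sub>0"
    have gr: "\<forall>x\<in>ball 0 (1/2). (c\<^sub>\<phi> * norm x) ^ k \<le> Phi \<phi> v \<omega> x" using growth H by blast
    have st: "\<forall>x\<in>ball 0 R\<^sub>0. A *v x + b + \<omega> \<in> open_cube 1" using standing H by blast
    have "ABS_hyp k (2*k+5) R\<^sub>0 Chi (Phi_h \<phi> v \<omega> h A b)"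
      unfolding Chi_def
      by (rule hyp_holds[OF coincide analytic k mM(2) bound c\<^sub>\<phi> gr _ _ st]) (use H in auto)
    hence "\<bar>pderivs is (Phi_h \<phi> v \<omega> h A b) x\<bar> \<le> C" using C H len by blast
    thus "\<bar>pderivs is (Phi_h \<phi> v \<omega> h A b) x\<bar> \<le> max C 2" by simp
  qed
qed


end
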